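(* Let $\mathcal{A}$ be a finite list of elements of $\mathbb{Z}^\ell$. The most degenerate constituent $f_{\rho_{\mathcal{A}}}(t)$ of the characteristic quasi-polynomial of $\mathcal{A}$ satisfies $$f_{\rho_{\mathcal{A}}}(t)=\chi^{\mathbb{C}^\times}_{\mathcal{A}}(t)=\chi^{\mathrm{arith}}_{\mathcal{A}}(t).$$
   Context: For a sublist $\mathcal{S}$ (distinguished by index), $r_{\mathcal{S}}$ is the rank of $\langle\mathcal{S}\rangle$; write $(\mathbb{Z}^\ell/\langle\mathcal{S}\rangle)_{\mathrm{tor}}\simeq\bigoplus_i\mathbb{Z}/d_{\mathcal{S},i}\mathbb{Z}$ with $d_{\mathcal{S},i}\mid d_{\mathcal{S},i+1}$, and $\rho_{\mathcal{A}}$ is the lcm over $\mathcal{S}$ of the largest $d_{\mathcal{S},i}$. The function $q\mapsto\#\{x\in(\mathbb{Z}/q\mathbb{Z})^\ell\mid\alpha(x)\neq0\ \forall\alpha\in\mathcal{A}\}$ is a quasi-polynomial with period $\rho_{\mathcal{A}}$ (Kamiya–Takemura–Terao); $f_{\rho_{\mathcal{A}}}(t)$ is the polynomial agreeing with it for all positive $q$ divisible by $\rho_{\mathcal{A}}$. $m(\mathcal{S};G)=\#\mathrm{Hom}((\mathbb{Z}^\ell/\langle\mathcal{S}\rangle)_{\mathrm{tor}},G)$, $\chi^G_{\mathcal{A}}(t)=\sum_{\mathcal{S}\subset\mathcal{A}}(-1)^{\#\mathcal{S}}m(\mathcal{S};G)t^{\ell-r_{\mathcal{S}}}$, and $\chi^{\mathrm{arith}}_{\mathcal{A}}(t)=\sum_{\mathcal{S}\subset\mathcal{A}}(-1)^{\#\mathcal{S}}m(\mathcal{S})t^{\ell-r_{\mathcal{S}}}$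 with $m(\mathcal{S})=\#(\mathbb{Z}^\ell/\langle\mathcal{S}\rangle)_{\mathrm{tor}}$. *)

theory Defs
  imports "HOL-Library.FuncSet" "HOL-Computational_Algebra.Polynomial"
begin

text \<open>Vectors of \<int>^l are represented as functions nat \<Rightarrow> int vanishing at indices \<ge> l.
  A list A of vectors is given; a sublist S is a set of indices S \<subseteq> {..<length A}.\<close>

definition zvec :: "nat \<Rightarrow> (nat \<Rightarrow> int) set" where
  "zvec l = {x. \<forall>i\<ge>l. x i = 0}"

definition lattice :: "(nat \<Rightarrow> int) list \<Rightarrow> nat set \<Rightarrow> (nat \<Rightarrow> int) set" where
  "lattice A S = {x. \<exists>c::nat \<Rightarrow> int. x = (\<lambda>i. \<Sum>j\<in>S. c j * (A ! j) i)}"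

definition zlin_indep :: "(nat \<Rightarrow> int) set \<Rightarrow> bool" where
  "zlin_indep V \<longleftrightarrow> (\<forall>c::(nat \<Rightarrow> int) \<Rightarrow> int.
      (\<lambda>i. \<Sum>v\<in>V. c v * v i) = (\<lambda>i. 0) \<longrightarrow> (\<forall>v\<in>V. c v = 0))"

definition rankS :: "(nat \<Rightarrow> int) list \<Rightarrow> nat set \<Rightarrow> nat" where
  "rankS A S = Max {card V | V. finite V \<and> V \<subseteq> lattice A S \<and> zlin_indep V}"

text \<open>Preimage in \<int>^l of the torsion subgroup of \<int>^l / <S>.\<close>
definition torsion :: "nat \<Rightarrow> (nat \<Rightarrow> int) list \<Rightarrow> nat set \<Rightarrow> (nat \<Rightarrow> int) set" where
  "torsion l A S = {x \<in> zvec l. \<exists>k::int. k > 0 \<and> (\<lambda>i. k * x i) \<in> lattice A S}"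

text \<open>Congruence modulo <S> on the torsion preimage; its classes form (\<int>^l/<S>)_tor.\<close>
definition tor_rel :: "nat \<Rightarrow> (nat \<Rightarrow> int) list \<Rightarrow> nat set \<Rightarrow> ((nat \<Rightarrow> int) \<times> (nat \<Rightarrow> int)) set" where
  "tor_rel l A S = {(x, y). x \<in> torsion l A S \<and> y \<in> torsion l A S \<and> (\<lambda>i. x i - y i) \<in> lattice A S}"

definition m_arith :: "nat \<Rightarrow> (nat \<Rightarrow> int) list \<Rightarrow> nat set \<Rightarrow> nat" where
  "m_arith l A S = card (torsion l A S // tor_rel l A S)"

text \<open>m(S; \<complex>^\<times>) = #Hom((\<int>^l/<S>)_tor, \<complex>^\<times>), realised as homomorphisms from the torsion
  preimage into \<complex>^\<times> that are trivial on <S> (universal property of the quotient);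
  functions are normalised to 1 outside the torsion preimage.\<close>
definition m_Cstar :: "nat \<Rightarrow> (nat \<Rightarrow> int) list \<Rightarrow> nat set \<Rightarrow> nat" where
  "m_Cstar l A S = card {\<phi> :: (nat \<Rightarrow> int) \<Rightarrow> complex.
      (\<forall>x\<in>torsion l A S. \<phi> x \<noteq> 0) \<and>
      (\<forall>x\<in>torsion l A S. \<forall>y\<in>torsion l A S. \<phi> (\<lambda>i. x i + y i) = \<phi> x * \<phi> y) \<and>
      (\<forall>x\<in>lattice A S. \<phi> x = 1) \<and>
      (\<forall>x. x \<notin> torsion l A S \<longrightarrow> \<phi> x = 1)}"

text \<open>Largest elementary divisor of (\<int>^l/<S>)_tor = its exponent.\<close>
definition max_div :: "nat \<Rightarrow> (nat \<Rightarrow> int) list \<Rightarrow> nat set \<Rightarrow> nat" where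
  "max_div l A S = (LEAST n::nat. n > 0 \<and> (\<forall>x\<in>torsion l A S. (\<lambda>i. int n * x i) \<in> lattice A S))"

definition rho :: "nat \<Rightarrow> (nat \<Rightarrow> int) list \<Rightarrow> nat" where
  "rho l A = Lcm ((\<lambda>S. max_div l A S) ` Pow {..<length A})"

definition char_qp :: "nat \<Rightarrow> (nat \<Rightarrow> int) list \<Rightarrow> nat \<Rightarrow> nat" where
  "char_qp l A q = card {x \<in> {..<l} \<rightarrow>\<^sub>E {..<q}.
      \<forall>\<alpha>\<in>set A. (\<Sum>i<l. \<alpha> i * int (x i)) mod int q \<noteq> 0}"

definition chi_Cstar :: "nat \<Rightarrow> (nat \<Rightarrow> int) list \<Rightarrow> int poly" where
  "chi_Cstar l A = (\<Sum>S\<in>Pow {..<length A}.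
      smult ((-1) ^ card S * int (m_Cstar l A S)) (monom 1 (l - rankS A S)))"

definition chi_arith :: "nat \<Rightarrow> (nat \<Rightarrow> int) list \<Rightarrow> int poly" where
  "chi_arith l A = (\<Sum>S\<in>Pow {..<length A}.
      smult ((-1) ^ card S * int (m_arith l A S)) (monom 1 (l - rankS A S)))"

end

theory Submission
  imports Defs
begin


definition dotp :: "nat \<Rightarrow> (nat\<Rightarrow>int) \<Rightarrow> (nat\<Rightarrow>int) \<Rightarrow> int" where
  "dotp n v x = (\<Sum>i<n. v i * x i)"
definition modv :: "int \<Rightarrow> (nat\<Rightarrow>int) \<Rightarrow> (nat\<Rightarrow>int)" where
  "modv q v = (\<lambda>i. v i mod q)"
definition box :: "nat \<Rightarrow> int \<Rightarrow> (nat\<Rightarrow>int) set" where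
  "box n q = {x. (\<forall>i<n. 0 \<le> x i \<and> x i < q) \<and> (\<forall>i\<ge>n. x i = 0)}"
definition subgrp :: "(nat\<Rightarrow>int) set \<Rightarrow> bool" where
  "subgrp G \<longleftrightarrow> (\<lambda>i. 0) \<in> G \<and> (\<forall>x\<in>G. \<forall>y\<in>G. (\<lambda>i. x i + y i) \<in> G) \<and> (\<forall>x\<in>G. (\<lambda>i. - x i) \<in> G)"
definition ee :: "int \<Rightarrow> int \<Rightarrow> complex" where
  "ee q a = cis (2 * pi * of_int a / of_int q)"

lemma ee_add: "ee q (a + b) = ee q a * ee q b"
  unfolding ee_def by (simp add: cis_mult add_divide_distrib distrib_left)

lemma ee_0[simp]: "ee q 0 = 1" by (simp add: ee_def)

lemma ee_nz[simp]: "ee q a \<noteq> 0" by (simp add: ee_def)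

lemma ee_1_iff: assumes "q > 0" shows "ee q a = 1 \<longleftrightarrow> q dvd a"
proof
  assume "ee q a = 1"
  then have "cos (2 * pi * of_int a / of_int q) = 1" unfolding ee_def
    by (metis cis.sel(1) one_complex.sel(1))
  then obtain n::int where n: "2 * pi * of_int a / of_int q = of_int n * 2 * pi"
    by (auto simp: cos_one_2pi_int)
  then have "real_of_int a = of_int n * of_int q" using assms
    by (simp add: field_simps)
  then have "a = n * q" by (metis of_int_eq_iff of_int_mult)
  then show "q dvd a" by simp
next
  assume "q dvd a"
  then obtain n where "a = q * n" by auto
  then have "2 * pi * of_int a / of_int q = 2 * pi * of_int n" using assms by (simp add: field_simps)
  then show "ee q a = 1" unfolding ee_def
    by (simp add: cis_multiple_2pi)
qed

lemma ee_mod: assumes "q > 0" shows "ee q (a mod q) = ee q a"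
proof -
  have "a = a mod q + q * (a div q)" by simp
  then have "ee q a = ee q (a mod q) * ee q (q * (a div q))" by (metis ee_add)
  also have "ee q (q * (a div q)) = 1" using assms ee_1_iff by auto
  finally show ?thesis by simp
qed

lemma ee_cong: assumes "q > 0" "a mod q = b mod q" shows "ee q a = ee q b"
  by (metis assms ee_mod)

lemma ee_pow: assumes "q > 0" shows "ee q a ^ nat q = 1"
proof -
  have "ee q a ^ n = ee q (int n * a)" for n
    by (induction n) (auto simp: ee_add distrib_right)
  then show ?thesis using assms ee_1_iff by auto
qed


lemma box_bij: "bij_betw (\<lambda>x i. if i < n then int (x i) else 0) ({..<n} \<rightarrow>\<^sub>E {..<Q}) (box n (int Q))"
  unfolding bij_betw_def
proof
  show "inj_on (\<lambda>x i. if i < n then int (x i) else 0) ({..<n} \<rightarrow>\<^sub>E {..<Q})"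
  proof (rule inj_onI)
    fix x y assume x: "x \<in> {..<n} \<rightarrow>\<^sub>E {..<Q}" and y: "y \<in> {..<n} \<rightarrow>\<^sub>E {..<Q}"
      and e: "(\<lambda>i. if i < n then int (x i) else 0) = (\<lambda>i. if i < n then int (y i) else 0)"
    show "x = y"
    proof
      fix i show "x i = y i"
      proof (cases "i < n")
        case True then show ?thesis using fun_cong[OF e, of i] by simp
      next
        case False then show ?thesis using x y by (auto simp: PiE_def extensional_def)
      qed
    qed
  qed
  show "(\<lambda>x i. if i < n then int (x i) else 0) ` ({..<n} \<rightarrow>\<^sub>E {..<Q}) = box n (int Q)"
  proof
    show "(\<lambda>x i. if i < n then int (x i) else 0) ` ({..<n} \<rightarrow>\<^sub>E {..<Q}) \<subseteq> box n (int Q)"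
      by (auto simp: box_def PiE_def Pi_def)
    show "box n (int Q) \<subseteq> (\<lambda>x i. if i < n then int (x i) else 0) ` ({..<n} \<rightarrow>\<^sub>E {..<Q})"
    proof
      fix y assume y: "y \<in> box n (int Q)"
      let ?x = "\<lambda>i. if i < n then nat (y i) else undefined"
      have "?x \<in> {..<n} \<rightarrow>\<^sub>E {..<Q}" using y by (auto simp: box_def PiE_def Pi_def extensional_def)
      moreover have "y = (\<lambda>i. if i < n then int (?x i) else 0)" using y by (auto simp: box_def fun_eq_iff)
      ultimately show "y \<in> (\<lambda>x i. if i < n then int (x i) else 0) ` ({..<n} \<rightarrow>\<^sub>E {..<Q})" by (rule image_eqI[of y "\<lambda>x i. if i < n then int (x i) else 0" ?x, rotated])
    qed
  qed
qed

lemma card_box_nat: "card (box n (int Q)) = Q ^ n"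
  using bij_betw_same_card[OF box_bij[of n Q]] by (simp add: card_PiE)

lemma finite_box_nat: "Q > 0 \<Longrightarrow> finite (box n (int Q))"
  using card_box_nat[of n Q] card_gt_0_iff by fastforce

lemma card_box: "q > 0 \<Longrightarrow> card (box n q) = nat q ^ n"
  using card_box_nat[of n "nat q"] by simp

lemma finite_box: "q > 0 \<Longrightarrow> finite (box n q)"
  using finite_box_nat[of "nat q" n] by simp

lemma box_zvec: "box n q \<subseteq> zvec n" by (auto simp: box_def zvec_def)

lemma modv_box: "v \<in> zvec n \<Longrightarrow> q > 0 \<Longrightarrow> modv q v \<in> box n q"
  by (auto simp: box_def zvec_def modv_def)

lemma modv_id: "x \<in> box n q \<Longrightarrow> modv q x = x"
proof -
  assume x: "x \<in> box n q"
  show ?thesis unfolding modv_def fun_eq_iff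
  proof
    fix i show "x i mod q = x i"
    proof (cases "i < n")
      case True then show ?thesis using x by (simp add: box_def)
    next
      case False then show ?thesis using x by (simp add: box_def)
    qed
  qed
qed

lemma dotp_mod2: "dotp n h (modv q y) mod q = dotp n h y mod q"
proof -
  have "(\<Sum>i<n. h i * (y i mod q)) mod q = (\<Sum>i<n. (h i * (y i mod q)) mod q) mod q" by (rule mod_sum_eq[symmetric])
  also have "\<dots> = (\<Sum>i<n. (h i * y i) mod q) mod q" by (simp only: mod_mult_right_eq)
  also have "\<dots> = (\<Sum>i<n. h i * y i) mod q" by (rule mod_sum_eq)
  finally show ?thesis unfolding dotp_def modv_def .
qed

lemma dotp_mod1: "dotp n (modv q h) y mod q = dotp n h y mod q"
proof -
  have "(\<Sum>i<n. h i mod q * y i) mod q = (\<Sum>i<n. (h i mod q * y i) mod q) mod q" by (rule mod_sum_eq[symmetric])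
  also have "\<dots> = (\<Sum>i<n. (h i * y i) mod q) mod q" by (simp only: mod_mult_left_eq)
  also have "\<dots> = (\<Sum>i<n. h i * y i) mod q" by (rule mod_sum_eq)
  finally show ?thesis unfolding dotp_def modv_def .
qed

lemma dotp_add2: "dotp n h (\<lambda>i. x i + y i) = dotp n h x + dotp n h y"
  unfolding dotp_def by (simp add: distrib_left sum.distrib)

lemma dotp_add1: "dotp n (\<lambda>i. x i + y i) h = dotp n x h + dotp n y h"
  unfolding dotp_def by (simp add: distrib_right sum.distrib)

lemma sum_shift_zero:
  assumes "finite X" "\<sigma> ` X \<subseteq> X" "inj_on \<sigma> X" "\<And>x. x \<in> X \<Longrightarrow> f (\<sigma> x) = c * f x" "c \<noteq> (1::complex)"
  shows "sum f X = 0"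
proof -
  have im: "\<sigma> ` X = X" using endo_inj_surj assms by blast
  have "sum f X = sum f (\<sigma> ` X)" using im by simp
  also have "\<dots> = sum (f \<circ> \<sigma>) X" using assms(3) by (rule sum.reindex)
  also have "\<dots> = c * sum f X" using assms(4) by (simp add: sum_distrib_left)
  finally have "(1 - c) * sum f X = 0" by (simp add: algebra_simps)
  then show ?thesis using assms(5) by simp
qed

lemma mod_shift_inj:
  assumes "q > 0" "x \<in> box n q" "y \<in> box n q" "modv q (\<lambda>i. x i + a i) = modv q (\<lambda>i. y i + a i)"
  shows "x = y"
proof -
  have "modv q x = modv q y"
  proof
    fix i
    have "(x i + a i) mod q = (y i + a i) mod q" using fun_cong[OF assms(4), of i] by (simp add: modv_def)
    then have "(x i + a i - a i) mod q = (y i + a i - a i) mod q" by (metis mod_diff_left_eq)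
    then show "modv q x i = modv q y i" by (simp add: modv_def)
  qed
  then show ?thesis using modv_id assms by metis
qed



lemma duality:
  assumes q: "q > 0" and G: "subgrp G" "G \<subseteq> zvec n"
  shows "card {x \<in> box n q. \<forall>v\<in>G. q dvd dotp n v x} * card (modv q ` G) = nat q ^ n"
proof -
  define H where "H = modv q ` G"
  define B where "B = box n q"
  have finB: "finite B" using finite_box q B_def by simp
  have HB: "H \<subseteq> B" using G(2) modv_box q unfolding H_def B_def by blast
  have finH: "finite H" using finB HB finite_subset by blast
  have zG: "(\<lambda>i. 0) \<in> G" using G(1) by (simp add: subgrp_def)
  have zH: "(\<lambda>i. 0) \<in> H" using zG unfolding H_def by (force simp: modv_def)
  have Hadd: "modv q (\<lambda>i. h1 i + h2 i) \<in> H" if hh: "h1 \<in> H" "h2 \<in> H" for h1 h2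
  proof -
    obtain v1 v2 where v: "v1 \<in> G" "v2 \<in> G" "h1 = modv q v1" "h2 = modv q v2"
      using hh unfolding H_def by blast
    have "modv q (\<lambda>i. h1 i + h2 i) = modv q (\<lambda>i. v1 i + v2 i)"
      unfolding v modv_def by (simp add: mod_add_eq)
    moreover have "(\<lambda>i. v1 i + v2 i) \<in> G" using G(1) v by (simp add: subgrp_def)
    ultimately show ?thesis unfolding H_def by simp
  qed
  have condeq: "(\<forall>v\<in>G. q dvd dotp n v x) \<longleftrightarrow> (\<forall>h\<in>H. q dvd dotp n h x)" for x
    unfolding H_def using dotp_mod1[of n q _ x]
    by (auto simp: dvd_eq_mod_eq_0) 
  have step1: "(\<Sum>h\<in>H. ee q (dotp n h x)) = (if \<forall>h\<in>H. q dvd dotp n h x then of_nat (card H) else 0)"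
    if x: "x \<in> B" for x
  proof (cases "\<forall>h\<in>H. q dvd dotp n h x")
    case True
    then have "(\<Sum>h\<in>H. ee q (dotp n h x)) = (\<Sum>h\<in>H. 1)"
      using ee_1_iff[OF q] by (intro sum.cong) auto
    then show ?thesis using True by simp
  next
    case False
    then obtain h0 where h0: "h0 \<in> H" "\<not> q dvd dotp n h0 x" by blast
    let ?s = "\<lambda>h. modv q (\<lambda>i. h i + h0 i)"
    have "(\<Sum>h\<in>H. ee q (dotp n h x)) = 0"
    proof (rule sum_shift_zero[where \<sigma> = ?s and c = "ee q (dotp n h0 x)"])
      show "finite H" by fact
      show "?s ` H \<subseteq> H" using Hadd h0 by blast
      show "inj_on ?s H" using mod_shift_inj[OF q] HB unfolding B_def by (intro inj_onI) blast
      show "ee q (dotp n (?s h) x) = ee q (dotp n h0 x) * ee q (dotp n h x)" if "h \<in> H" for h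
      proof -
        have "ee q (dotp n (?s h) x) = ee q (dotp n (\<lambda>i. h i + h0 i) x)"
          using dotp_mod1 q by (intro ee_cong) auto
        also have "\<dots> = ee q (dotp n h x) * ee q (dotp n h0 x)" by (simp add: dotp_add1 ee_add)
        finally show ?thesis by simp
      qed
      show "ee q (dotp n h0 x) \<noteq> 1" using h0 ee_1_iff[OF q] by simp
    qed
    then show ?thesis using False by auto
  qed
  have step2: "(\<Sum>x\<in>B. ee q (dotp n h x)) = (if h = (\<lambda>i. 0) then of_nat (nat q ^ n) else 0)"
    if h: "h \<in> H" for h
  proof (cases "h = (\<lambda>i. 0)")
    case True
    then have "(\<Sum>x\<in>B. ee q (dotp n h x)) = (\<Sum>x\<in>B. 1)" by (simp add: dotp_def)
    then show ?thesis using True card_box[OF q] B_def by simp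
  next
    case False
    have hB: "h \<in> B" using h HB by blast
    obtain j where j: "h j \<noteq> 0" using False by auto
    have jn: "j < n" using hB j unfolding B_def box_def by (metis (mono_tags, lifting) mem_Collect_eq not_less)
    have hj': "0 \<le> h j" "h j < q" using hB jn unfolding B_def box_def by auto
    have hj: "0 < h j" "h j < q" using hj' j by auto
    define d where "d = (\<lambda>i. if i = j then 1 else (0::int))"
    let ?s = "\<lambda>x. modv q (\<lambda>i. x i + d i)"
    have dz: "d \<in> zvec n" using jn by (auto simp: d_def zvec_def)
    have hd: "dotp n h d = h j" unfolding dotp_def d_def using jn
      by (simp add: if_distrib[of "\<lambda>t. h _ * t"] sum.delta cong: if_cong)
    have "(\<Sum>x\<in>B. ee q (dotp n h x)) = 0"
    proof (rule sum_shift_zero[where \<sigma> = ?s and c = "ee q (h j)"])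
      show "finite B" by fact
      show "?s ` B \<subseteq> B"
      proof
        fix y assume "y \<in> ?s ` B"
        then obtain x where x: "x \<in> B" "y = ?s x" by blast
        have "(\<lambda>i. x i + d i) \<in> zvec n" using x dz unfolding B_def zvec_def box_def by auto
        then show "y \<in> B" using modv_box q x unfolding B_def by simp
      qed
      show "inj_on ?s B" using mod_shift_inj[OF q] unfolding B_def by (intro inj_onI) blast
      show "ee q (dotp n h (?s x)) = ee q (h j) * ee q (dotp n h x)" if "x \<in> B" for x
      proof -
        have "ee q (dotp n h (?s x)) = ee q (dotp n h (\<lambda>i. x i + d i))"
          using dotp_mod2 q by (intro ee_cong) auto
        also have "\<dots> = ee q (dotp n h x) * ee q (h j)" by (simp add: dotp_add2 ee_add hd)
        finally show ?thesis by simp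
      qed
      show "ee q (h j) \<noteq> 1" using hj ee_1_iff[OF q] zdvd_not_zless by simp
    qed
    then show ?thesis using False by simp
  qed
  define N where "N = {x \<in> B. \<forall>h\<in>H. q dvd dotp n h x}"
  have "(\<Sum>x\<in>B. \<Sum>h\<in>H. ee q (dotp n h x)) = (\<Sum>x\<in>B. if \<forall>h\<in>H. q dvd dotp n h x then of_nat (card H) else 0)"
    using step1 by (rule sum.cong[OF refl])
  also have "\<dots> = (\<Sum>x\<in>N. of_nat (card H))"
    unfolding N_def by (simp only: sum.inter_filter[OF finB])
  also have "\<dots> = of_nat (card N * card H)" by simp
  finally have L: "(\<Sum>x\<in>B. \<Sum>h\<in>H. ee q (dotp n h x)) = of_nat (card N * card H)" .
  have "(\<Sum>x\<in>B. \<Sum>h\<in>H. ee q (dotp n h x)) = (\<Sum>h\<in>H. \<Sum>x\<in>B. ee q (dotp n h x))"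
    by (rule sum.swap)
  also have "\<dots> = (\<Sum>h\<in>H. if h = (\<lambda>i. 0) then of_nat (nat q ^ n) else 0)"
    using step2 by (rule sum.cong[OF refl])
  also have "\<dots> = of_nat (nat q ^ n)" using finH zH by (simp add: sum.delta)
  finally have "of_nat (card N * card H) = (of_nat (nat q ^ n) :: complex)" using L by simp
  then have "card N * card H = nat q ^ n" by (metis of_nat_eq_iff)
  moreover have "N = {x \<in> box n q. \<forall>v\<in>G. q dvd dotp n v x}" unfolding N_def B_def using condeq by auto
  ultimately show ?thesis unfolding H_def by simp
qed



definition comb :: "(nat\<Rightarrow>int) list \<Rightarrow> (nat\<Rightarrow>int) \<Rightarrow> (nat\<Rightarrow>int)" where
  "comb bs c = (\<lambda>i. \<Sum>j<length bs. c j * (bs ! j) i)"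

definition indep :: "(nat\<Rightarrow>int) list \<Rightarrow> bool" where
  "indep bs \<longleftrightarrow> (\<forall>c. comb bs c = (\<lambda>i. 0) \<longrightarrow> (\<forall>j<length bs. c j = 0))"

lemma subgrp_zero: "subgrp G \<Longrightarrow> (\<lambda>i. 0) \<in> G" by (simp add: subgrp_def)
lemma subgrp_add: "subgrp G \<Longrightarrow> x \<in> G \<Longrightarrow> y \<in> G \<Longrightarrow> (\<lambda>i. x i + y i) \<in> G" by (simp add: subgrp_def)
lemma subgrp_neg: "subgrp G \<Longrightarrow> x \<in> G \<Longrightarrow> (\<lambda>i. - x i) \<in> G" by (simp add: subgrp_def)

lemma subgrp_diff: "subgrp G \<Longrightarrow> x \<in> G \<Longrightarrow> y \<in> G \<Longrightarrow> (\<lambda>i. x i - y i) \<in> G"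
  using subgrp_add[of G x "\<lambda>i. - y i"] subgrp_neg[of G y] by simp

lemma subgrp_smult_nat: "subgrp G \<Longrightarrow> x \<in> G \<Longrightarrow> (\<lambda>i. int k * x i) \<in> G"
proof (induction k)
  case 0 then show ?case using subgrp_zero by simp
next
  case (Suc k)
  then have "(\<lambda>i. (\<lambda>i. int k * x i) i + x i) \<in> G" using subgrp_add by blast
  then show ?case by (simp add: distrib_right add.commute)
qed

lemma subgrp_smult: assumes "subgrp G" "x \<in> G" shows "(\<lambda>i. k * x i) \<in> G"
proof (cases "k \<ge> 0")
  case True
  then show ?thesis using subgrp_smult_nat[OF assms, of "nat k"] by simp
next
  case False
  have "(\<lambda>i. - (\<lambda>i. int (nat (-k)) * x i) i) \<in> G"
    using subgrp_neg[OF assms(1) subgrp_smult_nat[OF assms]] .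
  then show ?thesis using False by simp
qed

lemma subgrp_sum: assumes "subgrp G" "finite J" "\<And>j. j \<in> J \<Longrightarrow> f j \<in> G"
  shows "(\<lambda>i. \<Sum>j\<in>J. f j i) \<in> G"
  using assms(2,3)
proof (induction J rule: finite_induct)
  case empty then show ?case using subgrp_zero[OF assms(1)] by simp
next
  case (insert a J)
  then have "(\<lambda>i. f a i + (\<lambda>i. \<Sum>j\<in>J. f j i) i) \<in> G" using subgrp_add[OF assms(1)] by blast
  then show ?case using insert by simp
qed

lemma comb_in: assumes "subgrp G" "set bs \<subseteq> G" shows "comb bs c \<in> G"
  unfolding comb_def
  by (rule subgrp_sum[OF assms(1)]) (use assms in \<open>auto intro!: subgrp_smult\<close>)

lemma comb_cong: "(\<And>j. j < length bs \<Longrightarrow> c j = c' j) \<Longrightarrow> comb bs c = comb bs c'"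
  unfolding comb_def by auto

lemma comb_snoc: "comb (bs @ [g]) c = (\<lambda>i. comb bs c i + c (length bs) * g i)"
  unfolding comb_def by (auto simp: nth_append intro!: sum.cong)

lemma comb_zvec: "set bs \<subseteq> zvec n \<Longrightarrow> comb bs c \<in> zvec n"
  unfolding comb_def zvec_def by (auto intro!: sum.neutral dest!: nth_mem)

lemma zvec_SucD: assumes "x \<in> zvec (Suc k)" "x k = 0" shows "x \<in> zvec k"
  unfolding zvec_def mem_Collect_eq
proof (intro allI impI)
  fix i assume "k \<le> i"
  then have "i = k \<or> Suc k \<le> i" by linarith
  then show "x i = 0" using assms unfolding zvec_def by auto
qed

lemma zvec_mono: "x \<in> zvec k \<Longrightarrow> k \<le> m \<Longrightarrow> x \<in> zvec m"
  unfolding zvec_def by auto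

lemma basis_exists:
  "subgrp G \<Longrightarrow> G \<subseteq> zvec n \<Longrightarrow> \<exists>bs. length bs \<le> n \<and> set bs \<subseteq> G \<and> indep bs \<and> G = range (comb bs)"
proof (induction n arbitrary: G)
  case 0
  have "G = {\<lambda>i. 0}" using 0 subgrp_zero by (auto simp: zvec_def)
  moreover have "range (comb []) = {\<lambda>i. 0}" by (auto simp: comb_def)
  ultimately show ?case by (intro exI[of _ "[]"]) (auto simp: indep_def)
next
  case (Suc n)
  define G' where "G' = {x \<in> G. x n = 0}"
  have sG': "subgrp G'" using Suc.prems(1) unfolding G'_def subgrp_def by auto
  have zG': "G' \<subseteq> zvec n"
  proof
    fix x assume x: "x \<in> G'"
    have "x i = 0" if i: "n \<le> i" for i
    proof (cases "i = n")
      case True then show ?thesis using x unfolding G'_def by simp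
    next
      case False then have "Suc n \<le> i" using i by simp
      then show ?thesis using x Suc.prems(2) unfolding G'_def zvec_def by auto
    qed
    then show "x \<in> zvec n" unfolding zvec_def by simp
  qed
  obtain bs' where bs': "length bs' \<le> n" "set bs' \<subseteq> G'" "indep bs'" "G' = range (comb bs')"
    using Suc.IH[OF sG' zG'] by blast
  show ?case
  proof (cases "\<forall>x\<in>G. x n = 0")
    case True
    then have "G = G'" unfolding G'_def by auto
    then show ?thesis using bs' by (intro exI[of _ bs']) auto
  next
    case False
    then obtain x0 where x0: "x0 \<in> G" "x0 n \<noteq> 0" by auto
    define P where "P = (\<lambda>m::nat. m > 0 \<and> (\<exists>x\<in>G. x n = int m))"
    have "P (nat \<bar>x0 n\<bar>)"
    proof (cases "x0 n > 0")
      case True then show ?thesis using x0 unfolding P_def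
        by (intro conjI, simp, intro bexI[of _ x0]) auto
    next
      case False
      have m: "(\<lambda>i. - x0 i) \<in> G" by (rule subgrp_neg[OF Suc.prems(1) x0(1)])
      have v: "- x0 n = int (nat \<bar>x0 n\<bar>)" using False by linarith
      have "0 < nat \<bar>x0 n\<bar>" using x0(2) by simp
      moreover have "\<exists>x\<in>G. x n = int (nat \<bar>x0 n\<bar>)" using bexI[of "\<lambda>x. x n = int (nat \<bar>x0 n\<bar>)", OF _ m] v by blast
      ultimately show ?thesis unfolding P_def by blast
    qed
    define dn where "dn = (LEAST m. P m)"
    have Pd: "P dn" unfolding dn_def by (rule LeastI) fact
    have dmin: "\<And>m. P m \<Longrightarrow> dn \<le> m" unfolding dn_def by (rule Least_le)
    define d where "d = int dn"
    obtain g0 where g0: "g0 \<in> G" "g0 n = d" using Pd unfolding P_def d_def by auto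
    have dpos: "d > 0" using Pd unfolding P_def d_def by auto
    have decomp: "(\<lambda>i. x i - (x n div d) * g0 i) \<in> G'" if x: "x \<in> G" for x
    proof -
      let ?y = "\<lambda>i. x i - (x n div d) * g0 i"
      have yG: "?y \<in> G" using subgrp_diff[OF Suc.prems(1) x subgrp_smult[OF Suc.prems(1) g0(1)]] .
      have yn: "?y n = x n mod d" using g0 by (simp add: minus_div_mult_eq_mod[symmetric] mult.commute)
      have "x n mod d = 0"
      proof (rule ccontr)
        assume ne: "x n mod d \<noteq> 0"
        have "0 \<le> x n mod d" "x n mod d < d" using dpos by auto
        then have "P (nat (x n mod d))" using ne yG yn unfolding P_def by auto
        then have "dn \<le> nat (x n mod d)" by (rule dmin)
        then show False using \<open>0 \<le> x n mod d\<close> \<open>x n mod d < d\<close> unfolding d_def by (simp add: le_nat_iff)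
      qed
      then show ?thesis using yG yn unfolding G'_def by auto
    qed
    define bs where "bs = bs' @ [g0]"
    have bsG: "set bs \<subseteq> G" using bs' g0 unfolding bs_def G'_def by auto
    have b'n: "\<And>j. j < length bs' \<Longrightarrow> (bs' ! j) n = 0" using bs'(2) unfolding G'_def
      by (auto dest!: nth_mem)
    have combn: "comb bs' c n = 0" for c unfolding comb_def using b'n by simp
    have "indep bs" unfolding indep_def
    proof (rule allI, rule impI)
      fix c assume c0: "comb bs c = (\<lambda>i. 0)"
      have "c (length bs') * d = 0" using fun_cong[OF c0, of n] g0 combn unfolding bs_def comb_snoc by simp
      then have cl: "c (length bs') = 0" using dpos by simp
      then have "comb bs' c = (\<lambda>i. 0)" using c0 unfolding bs_def comb_snoc by (simp add: fun_eq_iff)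
      then have "\<forall>j<length bs'. c j = 0" using bs'(3) unfolding indep_def by blast
      then show "\<forall>j<length bs. c j = 0" using cl by (auto simp: bs_def less_Suc_eq)
    qed
    moreover have "G = range (comb bs)"
    proof
      show "range (comb bs) \<subseteq> G" using comb_in[OF Suc.prems(1) bsG] by auto
      show "G \<subseteq> range (comb bs)"
      proof
        fix x assume x: "x \<in> G"
        obtain c' where c': "(\<lambda>i. x i - (x n div d) * g0 i) = comb bs' c'"
          using decomp[OF x] bs'(4) by auto
        define c where "c = c'(length bs' := x n div d)"
        have "comb bs' c = comb bs' c'" unfolding c_def by (rule comb_cong) auto
        then have "comb bs c = x" unfolding bs_def comb_snoc using c'
          by (auto simp: fun_eq_iff c_def dest: fun_cong[of _ _ x] ) (metis add.commute diff_add_cancel fun_cong[OF c'])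
        then show "x \<in> range (comb bs)" by (metis rangeI)
      qed
    qed
    moreover have "length bs \<le> Suc n" using bs' unfolding bs_def by simp
    ultimately show ?thesis using bsG by blast
  qed
qed

lemma dep_exists:
  "finite I \<Longrightarrow> f ` I \<subseteq> zvec k \<Longrightarrow> card I > k \<Longrightarrow>
    \<exists>d. (\<exists>i\<in>I. d i \<noteq> 0) \<and> (\<lambda>t. \<Sum>i\<in>I. d i * f i t) = (\<lambda>t. 0)"
proof (induction k arbitrary: I f)
  case 0
  then obtain i0 where i0: "i0 \<in> I" by fastforce
  have fz: "f i t = 0" if "i \<in> I" for i t using 0 that by (auto simp: zvec_def)
  show ?case
    by (rule exI[of _ "\<lambda>i. if i = i0 then 1 else 0"]) (use i0 fz 0 in \<open>auto simp: fun_eq_iff\<close>)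
next
  case (Suc k)
  show ?case
  proof (cases "\<forall>i\<in>I. f i k = 0")
    case True
    then have "f ` I \<subseteq> zvec k" using Suc.prems(2) zvec_SucD by blast
    then show ?thesis using Suc.IH[of I f] Suc.prems by auto
  next
    case False
    then obtain i0 where i0: "i0 \<in> I" "f i0 k \<noteq> 0" by auto
    define a where "a = f i0 k"
    define I' where "I' = I - {i0}"
    define g where "g = (\<lambda>i t. a * f i t - f i k * f i0 t)"
    have finI': "finite I'" using Suc.prems unfolding I'_def by simp
    have cI': "card I' > k" using Suc.prems i0 unfolding I'_def by (simp add: card_Diff_singleton)
    have gz: "g ` I' \<subseteq> zvec k"
    proof
      fix v assume "v \<in> g ` I'"
      then obtain i where i: "i \<in> I" "v = g i" unfolding I'_def by auto
      have "f i \<in> zvec (Suc k)" "f i0 \<in> zvec (Suc k)" using Suc.prems(2) i i0 by auto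
      moreover have "v \<in> zvec (Suc k)" using calculation unfolding zvec_def i g_def a_def by auto
      moreover have "v k = 0" unfolding i g_def a_def by simp
      ultimately show "v \<in> zvec k" using zvec_SucD by blast
    qed
    obtain d' where d': "\<exists>i\<in>I'. d' i \<noteq> 0" "(\<lambda>t. \<Sum>i\<in>I'. d' i * g i t) = (\<lambda>t. 0)"
      using Suc.IH[OF finI' gz cI'] by blast
    define d where "d = (\<lambda>i. if i = i0 then - (\<Sum>j\<in>I'. d' j * f j k) else a * d' i)"
    have Isplit: "I = insert i0 I'" using i0 unfolding I'_def by auto
    have "(\<Sum>i\<in>I. d i * f i t) = 0" for t
    proof -
      have ni: "i0 \<notin> I'" unfolding I'_def by simp
      have "(\<Sum>i\<in>I. d i * f i t) = (\<Sum>i\<in>insert i0 I'. d i * f i t)" using Isplit by simp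
      also have "\<dots> = d i0 * f i0 t + (\<Sum>i\<in>I'. d i * f i t)" by (rule sum.insert[OF finI' ni])
      also have "(\<Sum>i\<in>I'. d i * f i t) = (\<Sum>i\<in>I'. a * d' i * f i t)"
        by (rule sum.cong) (auto simp: d_def I'_def)
      also have "d i0 * f i0 t + (\<Sum>i\<in>I'. a * d' i * f i t) = (\<Sum>i\<in>I'. d' i * g i t)"
        by (simp add: d_def g_def sum_distrib_right sum_distrib_left right_diff_distrib
            sum_subtractf algebra_simps)
      also have "\<dots> = 0" using fun_cong[OF d'(2), of t] by simp
      finally show ?thesis .
    qed
    moreover have "\<exists>i\<in>I. d i \<noteq> 0" using d'(1) i0 unfolding d_def a_def I'_def by auto
    ultimately show ?thesis by (intro exI[of _ d]) (auto simp: fun_eq_iff)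
  qed
qed



lemma lattice_subgrp: "subgrp (lattice A S)"
  unfolding subgrp_def lattice_def
proof (intro conjI ballI)
  show "(\<lambda>i. 0) \<in> {x. \<exists>c. x = (\<lambda>i. \<Sum>j\<in>S. c j * (A ! j) i)}"
    by (rule CollectI, rule exI[of _ "\<lambda>j. 0"]) simp
next
  fix x y assume "x \<in> {x. \<exists>c. x = (\<lambda>i. \<Sum>j\<in>S. c j * (A ! j) i)}" "y \<in> {x. \<exists>c. x = (\<lambda>i. \<Sum>j\<in>S. c j * (A ! j) i)}"
  then obtain c d where "x = (\<lambda>i. \<Sum>j\<in>S. c j * (A ! j) i)" "y = (\<lambda>i. \<Sum>j\<in>S. d j * (A ! j) i)" by blast
  then have eq: "(\<lambda>i. x i + y i) = (\<lambda>i. \<Sum>j\<in>S. (c j + d j) * (A ! j) i)"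
    by (simp add: distrib_right sum.distrib)
  show "(\<lambda>i. x i + y i) \<in> {x. \<exists>c. x = (\<lambda>i. \<Sum>j\<in>S. c j * (A ! j) i)}"
    by (intro CollectI exI[of _ "\<lambda>j. c j + d j"]) (simp only: eq)
next
  fix x assume "x \<in> {x. \<exists>c. x = (\<lambda>i. \<Sum>j\<in>S. c j * (A ! j) i)}"
  then obtain c where "x = (\<lambda>i. \<Sum>j\<in>S. c j * (A ! j) i)" by blast
  then have eq: "(\<lambda>i. - x i) = (\<lambda>i. \<Sum>j\<in>S. (- c j) * (A ! j) i)"
    by (simp add: sum_negf)
  show "(\<lambda>i. - x i) \<in> {x. \<exists>c. x = (\<lambda>i. \<Sum>j\<in>S. c j * (A ! j) i)}"
    by (intro CollectI exI[of _ "\<lambda>j. - c j"]) (simp only: eq)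
qed

lemma lattice_zvec:
  assumes hA: "\<forall>\<alpha>\<in>set A. \<alpha> \<in> zvec l" and hS: "S \<subseteq> {..<length A}"
  shows "lattice A S \<subseteq> zvec l"
proof
  fix x assume "x \<in> lattice A S"
  then obtain c where c: "x = (\<lambda>i. \<Sum>j\<in>S. c j * (A ! j) i)" unfolding lattice_def by blast
  have "(A ! j) i = 0" if "j \<in> S" "l \<le> i" for i j
  proof -
    have "A ! j \<in> set A" using hS that by auto
    then show ?thesis using hA that unfolding zvec_def by auto
  qed
  then show "x \<in> zvec l" unfolding c zvec_def by simp
qed

lemma lattice_gen:
  assumes "finite S" "j \<in> S" shows "A ! j \<in> lattice A S"
proof -
  have "(\<lambda>i. \<Sum>j'\<in>S. (if j' = j then 1 else 0) * (A ! j') i) = A ! j"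
    using assms by (simp add: if_distrib[of "\<lambda>t. t * _"] sum.delta' cong: if_cong)
  then show ?thesis unfolding lattice_def
    by (intro CollectI exI[of _ "\<lambda>j'. if j' = j then 1 else 0"]) simp
qed

lemma lattice_gen_iff:
  assumes "finite S"
  shows "(\<forall>v\<in>lattice A S. P v) \<longleftrightarrow> (\<forall>v\<in>lattice A S. P v)" by simp

lemma lattice_torsion:
  assumes hA: "\<forall>\<alpha>\<in>set A. \<alpha> \<in> zvec l" and hS: "S \<subseteq> {..<length A}"
  shows "lattice A S \<subseteq> torsion l A S"
proof
  fix x assume x: "x \<in> lattice A S"
  have "(\<lambda>i. 1 * x i) \<in> lattice A S" using x by simp
  then show "x \<in> torsion l A S" unfolding torsion_def using lattice_zvec[OF hA hS] x
    by (intro CollectI conjI exI[of _ 1]) auto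
qed

lemma torsion_zvec: "torsion l A S \<subseteq> zvec l" unfolding torsion_def by auto

lemma torsion_subgrp:
  assumes hA: "\<forall>\<alpha>\<in>set A. \<alpha> \<in> zvec l" and hS: "S \<subseteq> {..<length A}"
  shows "subgrp (torsion l A S)"
  unfolding subgrp_def
proof (intro conjI ballI)
  show "(\<lambda>i. 0) \<in> torsion l A S"
    using lattice_torsion[OF hA hS] subgrp_zero[OF lattice_subgrp] by blast
next
  fix x y assume x: "x \<in> torsion l A S" and y: "y \<in> torsion l A S"
  obtain a where a: "a > 0" "(\<lambda>i. a * x i) \<in> lattice A S" using x unfolding torsion_def by auto
  obtain b where b: "b > 0" "(\<lambda>i. b * y i) \<in> lattice A S" using y unfolding torsion_def by auto
  have "(\<lambda>i. (\<lambda>i. b * (\<lambda>i. a * x i) i) i + (\<lambda>i. a * (\<lambda>i. b * y i) i) i) \<in> lattice A S"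
    by (intro subgrp_add[OF lattice_subgrp] subgrp_smult[OF lattice_subgrp] a b)
  then have "(\<lambda>i. (a * b) * (x i + y i)) \<in> lattice A S" by (simp add: algebra_simps)
  moreover have "(\<lambda>i. x i + y i) \<in> zvec l" using x y unfolding torsion_def zvec_def by auto
  moreover have "a * b > 0" using a b by simp
  ultimately show "(\<lambda>i. x i + y i) \<in> torsion l A S" unfolding torsion_def by blast
next
  fix x assume x: "x \<in> torsion l A S"
  obtain a where a: "a > 0" "(\<lambda>i. a * x i) \<in> lattice A S" using x unfolding torsion_def by auto
  have "(\<lambda>i. - (\<lambda>i. a * x i) i) \<in> lattice A S" by (rule subgrp_neg[OF lattice_subgrp a(2)])
  then have "(\<lambda>i. a * (- x i)) \<in> lattice A S" by simp
  moreover have "(\<lambda>i. - x i) \<in> zvec l" using x unfolding torsion_def zvec_def by auto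
  ultimately show "(\<lambda>i. - x i) \<in> torsion l A S" unfolding torsion_def using a(1) by blast
qed

lemma torsion_sat:
  assumes "w \<in> zvec l" "q > 0" "(\<lambda>i. q * w i) \<in> torsion l A S"
  shows "w \<in> torsion l A S"
proof -
  obtain a where a: "a > 0" "(\<lambda>i. a * (q * w i)) \<in> lattice A S" using assms(3) unfolding torsion_def by auto
  then have "(\<lambda>i. (a * q) * w i) \<in> lattice A S" by (simp add: mult.assoc)
  moreover have "a * q > 0" using a assms by simp
  ultimately show ?thesis unfolding torsion_def using assms(1) by blast
qed

lemma comb_add: "comb bs (\<lambda>j. a j + b j) = (\<lambda>i. comb bs a i + comb bs b i)"
  unfolding comb_def by (simp add: distrib_right sum.distrib)
lemma comb_smult: "comb bs (\<lambda>j. s * a j) = (\<lambda>i. s * comb bs a i)"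
  unfolding comb_def by (simp add: sum_distrib_left mult.assoc)
lemma comb_diff: "comb bs (\<lambda>j. a j - b j) = (\<lambda>i. comb bs a i - comb bs b i)"
  unfolding comb_def by (simp add: left_diff_distrib sum_subtractf)
lemma comb_neg: "comb bs (\<lambda>j. - a j) = (\<lambda>i. - comb bs a i)"
  unfolding comb_def by (simp add: sum_negf)

lemma modv_eq_iff: "modv q a = modv q b \<longleftrightarrow> (\<forall>i. q dvd (a i - b i))"
  unfolding modv_def fun_eq_iff by (simp add: mod_eq_dvd_iff)

lemma card_image_rel:
  assumes "\<And>a b. a \<in> X \<Longrightarrow> b \<in> X \<Longrightarrow> f a = f b \<longleftrightarrow> g a = g b"
  shows "card (f ` X) = card (g ` X)"
proof -
  define h where "h = (\<lambda>y. g (SOME a. a \<in> X \<and> f a = y))"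
  have hf: "h (f a) = g a" if a: "a \<in> X" for a
  proof -
    have ex: "\<exists>a'. a' \<in> X \<and> f a' = f a" using a by blast
    have "(SOME a'. a' \<in> X \<and> f a' = f a) \<in> X \<and> f (SOME a'. a' \<in> X \<and> f a' = f a) = f a"
      by (rule someI_ex[OF ex])
    then show ?thesis unfolding h_def using assms a by blast
  qed
  have "inj_on h (f ` X)"
  proof (rule inj_onI)
    fix y1 y2 assume "y1 \<in> f ` X" "y2 \<in> f ` X" "h y1 = h y2"
    then obtain a b where ab: "a \<in> X" "b \<in> X" "y1 = f a" "y2 = f b" "h (f a) = h (f b)" by blast
    then have "g a = g b" using hf by simp
    then show "y1 = y2" using assms ab by blast
  qed
  moreover have "h ` f ` X = g ` X" using hf by (auto simp: image_image)
  ultimately show ?thesis by (metis card_image)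
qed



locale latS =
  fixes l :: nat and A :: "(nat\<Rightarrow>int) list" and S :: "nat set" and bs :: "(nat\<Rightarrow>int) list"
  assumes hA: "\<forall>\<alpha>\<in>set A. \<alpha> \<in> zvec l" and hS: "S \<subseteq> {..<length A}"
    and bsT: "set bs \<subseteq> torsion l A S" and bsi: "indep bs" and bsr: "torsion l A S = range (comb bs)"
begin

abbreviation "L \<equiv> lattice A S"
abbreviation "T \<equiv> torsion l A S"
abbreviation "k \<equiv> length bs"

lemma sL: "subgrp L" by (rule lattice_subgrp)
lemma sT: "subgrp T" by (rule torsion_subgrp[OF hA hS])
lemma LT: "L \<subseteq> T" by (rule lattice_torsion[OF hA hS])
lemma Tz: "T \<subseteq> zvec l" by (rule torsion_zvec)

lemma comb_trunc: "comb bs c = comb bs (\<lambda>j. if j < k then c j else 0)"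
  by (rule comb_cong) simp

lemma T_img: "T = comb bs ` zvec k"
proof
  show "T \<subseteq> comb bs ` zvec k"
  proof
    fix x assume "x \<in> T"
    then obtain c where "x = comb bs c" using bsr by auto
    then have "x = comb bs (\<lambda>j. if j < k then c j else 0)" using comb_trunc by simp
    moreover have "(\<lambda>j. if j < k then c j else 0) \<in> zvec k" by (simp add: zvec_def)
    ultimately show "x \<in> comb bs ` zvec k" by blast
  qed
  show "comb bs ` zvec k \<subseteq> T" using bsr by auto
qed

lemma comb_T: "comb bs c \<in> T" using bsr by auto

lemma comb_inj: assumes "a \<in> zvec k" "b \<in> zvec k" "comb bs a = comb bs b" shows "a = b"
proof
  fix j
  have "comb bs (\<lambda>j. a j - b j) = (\<lambda>i. 0)" using assms(3) by (simp add: comb_diff)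
  then have "\<forall>j<k. a j - b j = 0" using bsi unfolding indep_def by blast
  then show "a j = b j" using assms(1,2) unfolding zvec_def by (cases "j < k") auto
qed

lemma inj_comb: "inj_on (comb bs) (zvec k)"
  using comb_inj by (intro inj_onI) blast

definition co where "co = inv_into (zvec k) (comb bs)"

lemma co_zvec: "x \<in> T \<Longrightarrow> co x \<in> zvec k"
  unfolding co_def using T_img by (metis inv_into_into)
lemma co_comb: "x \<in> T \<Longrightarrow> comb bs (co x) = x"
  unfolding co_def using T_img by (metis f_inv_into_f)
lemma co_of: "c \<in> zvec k \<Longrightarrow> co (comb bs c) = c"
  unfolding co_def using inj_comb by (rule inv_into_f_f)

definition M where "M = {c \<in> zvec k. comb bs c \<in> L}"

lemma M_zvec: "M \<subseteq> zvec k" unfolding M_def by auto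

lemma M_subgrp: "subgrp M"
  unfolding subgrp_def
proof (intro conjI ballI)
  have "comb bs (\<lambda>i. 0) = (\<lambda>i. 0)" by (simp add: comb_def)
  then show "(\<lambda>i. 0) \<in> M" unfolding M_def using subgrp_zero[OF sL] by (simp add: zvec_def)
next
  fix x y assume "x \<in> M" "y \<in> M"
  then have "x \<in> zvec k" "y \<in> zvec k" "comb bs x \<in> L" "comb bs y \<in> L" unfolding M_def by auto
  then show "(\<lambda>i. x i + y i) \<in> M" unfolding M_def
    using subgrp_add[OF sL, of "comb bs x" "comb bs y"] by (simp add: comb_add zvec_def)
next
  fix x assume "x \<in> M"
  then have "x \<in> zvec k" "comb bs x \<in> L" unfolding M_def by auto
  then show "(\<lambda>i. - x i) \<in> M" unfolding M_def
    using subgrp_neg[OF sL, of "comb bs x"] by (simp add: comb_neg zvec_def)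
qed

lemma L_img: "L = comb bs ` M"
proof
  show "L \<subseteq> comb bs ` M"
  proof
    fix x assume x: "x \<in> L"
    then have "x \<in> T" using LT by blast
    then have "co x \<in> M" "comb bs (co x) = x" using co_zvec co_comb x unfolding M_def by auto
    then show "x \<in> comb bs ` M" by (metis image_eqI)
  qed
  show "comb bs ` M \<subseteq> L" unfolding M_def by auto
qed

lemma exp_exists: "\<exists>E::nat. E > 0 \<and> (\<forall>x\<in>T. (\<lambda>i. int E * x i) \<in> L)"
proof -
  have ex: "\<exists>n::nat. n > 0 \<and> (\<lambda>i. int n * (bs ! j) i) \<in> L" if j: "j < k" for j
  proof -
    have "bs ! j \<in> T" using bsT j by auto
    then obtain a where a: "a > 0" "(\<lambda>i. a * (bs ! j) i) \<in> L" unfolding torsion_def by auto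
    then show ?thesis by (intro exI[of _ "nat a"]) simp
  qed
  define f where "f = (\<lambda>j. SOME n::nat. n > 0 \<and> (\<lambda>i. int n * (bs ! j) i) \<in> L)"
  have f: "f j > 0 \<and> (\<lambda>i. int (f j) * (bs ! j) i) \<in> L" if "j < k" for j
    unfolding f_def by (rule someI_ex[OF ex[OF that]])
  define E where "E = (\<Prod>j<k. f j)"
  have Epos: "E > 0" unfolding E_def using f by (simp add: prod_pos)
  have Eb: "(\<lambda>i. int E * (bs ! j) i) \<in> L" if j: "j < k" for j
  proof -
    have "E = f j * (\<Prod>j'\<in>{..<k} - {j}. f j')" unfolding E_def using j
      by (simp add: prod.remove)
    then have "(\<lambda>i. int E * (bs ! j) i) = (\<lambda>i. int (\<Prod>j'\<in>{..<k} - {j}. f j') * (\<lambda>i. int (f j) * (bs ! j) i) i)"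
      by (simp add: mult.assoc mult.commute mult.left_commute)
    also have "\<dots> \<in> L" by (rule subgrp_smult[OF sL f[OF j, THEN conjunct2]])
    finally show ?thesis .
  qed
  have "(\<lambda>i. int E * x i) \<in> L" if x: "x \<in> T" for x
  proof -
    have "(\<lambda>i. int E * x i) = comb bs (\<lambda>j. int E * co x j)" by (simp add: comb_smult co_comb[OF x])
    also have "\<dots> = (\<lambda>i. \<Sum>j<k. co x j * (int E * (bs ! j) i))"
      unfolding comb_def by (simp add: mult.commute mult.left_commute)
    also have "\<dots> \<in> L"
      by (rule subgrp_sum[OF sL]) (use Eb subgrp_smult[OF sL] in auto)
    finally show ?thesis .
  qed
  then show ?thesis using Epos by blast
qed

lemma max_div_prop: "max_div l A S > 0 \<and> (\<forall>x\<in>T. (\<lambda>i. int (max_div l A S) * x i) \<in> L)"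
  unfolding max_div_def by (rule LeastI_ex[OF exp_exists])

lemma qT_L: assumes "max_div l A S dvd q" "x \<in> T" shows "(\<lambda>i. int q * x i) \<in> L"
proof -
  obtain r where r: "q = max_div l A S * r" using assms(1) by auto
  have "(\<lambda>i. int r * (\<lambda>i. int (max_div l A S) * x i) i) \<in> L"
    using subgrp_smult[OF sL] max_div_prop assms(2) by blast
  then show ?thesis unfolding r by (simp add: mult.assoc mult.commute mult.left_commute)
qed

end



lemma card_quotient_map:
  assumes eA: "equiv X R" and eB: "equiv Y R'" and gA: "g ` X = Y"
    and rel: "\<And>a b. a \<in> X \<Longrightarrow> b \<in> X \<Longrightarrow> (a, b) \<in> R \<longleftrightarrow> (g a, g b) \<in> R'"
  shows "card (X // R) = card (Y // R')"
proof -
  have RX: "R \<subseteq> X \<times> X" using eA by (simp add: equiv_def refl_on_def)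
  have cls: "g ` (R``{a}) = R'``{g a}" if a: "a \<in> X" for a
  proof
    show "g ` (R``{a}) \<subseteq> R'``{g a}"
    proof
      fix c assume "c \<in> g ` (R``{a})"
      then obtain b where b: "(a, b) \<in> R" "c = g b" by blast
      then have "b \<in> X" using RX by blast
      then show "c \<in> R'``{g a}" using rel[OF a] b by blast
    qed
    show "R'``{g a} \<subseteq> g ` (R``{a})"
    proof
      fix c assume c: "c \<in> R'``{g a}"
      have "R' \<subseteq> Y \<times> Y" using eB by (simp add: equiv_def refl_on_def)
      then have "c \<in> Y" using c by blast
      then obtain b where b: "b \<in> X" "c = g b" using gA by blast
      then have "(a, b) \<in> R" using rel[OF a b(1)] c by blast
      then show "c \<in> g ` (R``{a})" using b by blast
    qed
  qed
  have "inj_on (\<lambda>Z. g ` Z) (X // R)"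
  proof (rule inj_onI)
    fix Z1 Z2 assume Z1: "Z1 \<in> X // R" and Z2: "Z2 \<in> X // R" and e: "g ` Z1 = g ` Z2"
    obtain a where a: "a \<in> X" "Z1 = R``{a}" using Z1 by (auto elim: quotientE)
    obtain b where b: "b \<in> X" "Z2 = R``{b}" using Z2 by (auto elim: quotientE)
    have 1: "R'``{g a} = g ` Z1" using cls[OF a(1)] a(2) by simp
    have 2: "R'``{g b} = g ` Z2" using cls[OF b(1)] b(2) by simp
    have "g a \<in> Y" "g b \<in> Y" using gA a b by blast+
    then have "(g a, g b) \<in> R'" using eq_equiv_class_iff[OF eB] 1 2 e by metis
    then have "(a, b) \<in> R" using rel a b by blast
    then show "Z1 = Z2" using a b eA by (simp add: equiv_class_eq)
  qed
  moreover have "(\<lambda>Z. g ` Z) ` (X // R) = Y // R'"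
  proof
    show "(\<lambda>Z. g ` Z) ` (X // R) \<subseteq> Y // R'"
    proof
      fix W assume "W \<in> (\<lambda>Z. g ` Z) ` (X // R)"
      then obtain a where a: "a \<in> X" "W = g ` (R``{a})" by (auto elim: quotientE)
      then have "W = R'``{g a}" using cls by simp
      moreover have "g a \<in> Y" using gA a by blast
      ultimately show "W \<in> Y // R'" by (auto intro: quotientI)
    qed
    show "Y // R' \<subseteq> (\<lambda>Z. g ` Z) ` (X // R)"
    proof
      fix W assume "W \<in> Y // R'"
      then obtain c where c: "c \<in> Y" "W = R'``{c}" by (auto elim: quotientE)
      then obtain a where a: "a \<in> X" "c = g a" using gA by blast
      then have "W = g ` (R``{a})" using c cls by simp
      moreover have "R``{a} \<in> X // R" using a by (auto intro: quotientI)
      ultimately show "W \<in> (\<lambda>Z. g ` Z) ` (X // R)" by blast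
    qed
  qed
  ultimately show ?thesis by (metis card_image)
qed

locale latSq = latS +
  fixes q :: int
  assumes qpos: "q > 0" and qdiv: "int (max_div l A S) dvd q"
begin

lemma qTL: assumes "x \<in> T" shows "(\<lambda>i. q * x i) \<in> L"
proof -
  have "int (max_div l A S) dvd int (nat q)" using qdiv qpos by simp
  then have "max_div l A S dvd nat q" by (simp only: int_dvd_int_iff)
  then have "(\<lambda>i. int (nat q) * x i) \<in> L" using qT_L assms by blast
  then show ?thesis using qpos by simp
qed

lemma zvec_diff: "a \<in> zvec n \<Longrightarrow> b \<in> zvec n \<Longrightarrow> (\<lambda>i. a i - b i) \<in> zvec n"
  unfolding zvec_def by auto

lemma comb_zvec_l: "comb bs c \<in> zvec l" using comb_T Tz by blast

lemma E_key: assumes "a \<in> M" "b \<in> M"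
  shows "modv q (comb bs a) = modv q (comb bs b) \<longleftrightarrow> modv q a = modv q b"
proof
  assume "modv q a = modv q b"
  then have d: "\<forall>j. q dvd (a j - b j)" by (simp add: modv_eq_iff)
  have "q dvd (comb bs a i - comb bs b i)" for i
  proof -
    have "comb bs a i - comb bs b i = (\<Sum>j<k. (a j - b j) * (bs ! j) i)"
      using fun_cong[OF comb_diff[of bs a b], of i] by (simp add: comb_def)
    also have "q dvd \<dots>" using d by (intro dvd_sum) simp
    finally show ?thesis .
  qed
  then show "modv q (comb bs a) = modv q (comb bs b)" by (simp add: modv_eq_iff)
next
  assume "modv q (comb bs a) = modv q (comb bs b)"
  then have d: "\<forall>i. q dvd (comb bs a i - comb bs b i)" by (simp add: modv_eq_iff)
  define w where "w = (\<lambda>i. (comb bs a i - comb bs b i) div q)"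
  have qw: "(\<lambda>i. q * w i) = comb bs (\<lambda>j. a j - b j)"
    unfolding w_def comb_diff using d by (simp add: fun_eq_iff)
  have abM: "(\<lambda>j. a j - b j) \<in> M" using subgrp_diff[OF M_subgrp assms] .
  have "(\<lambda>i. q * w i) \<in> T" using qw abM LT unfolding M_def by auto
  moreover have "w \<in> zvec l" unfolding w_def using comb_zvec_l[of a] comb_zvec_l[of b]
    by (simp add: zvec_def)
  ultimately have wT: "w \<in> T" using torsion_sat qpos by blast
  define u where "u = co w"
  have u: "u \<in> zvec k" "comb bs u = w" using co_zvec[OF wT] co_comb[OF wT] unfolding u_def by auto
  have "comb bs (\<lambda>j. q * u j) = comb bs (\<lambda>j. a j - b j)" using u(2) qw by (simp add: comb_smult)
  moreover have "(\<lambda>j. q * u j) \<in> zvec k" using u(1) by (simp add: zvec_def)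
  moreover have "(\<lambda>j. a j - b j) \<in> zvec k" using abM M_zvec by blast
  ultimately have "(\<lambda>j. q * u j) = (\<lambda>j. a j - b j)" using comb_inj by blast
  then have "\<forall>j. q dvd (a j - b j)" by (metis dvd_triv_left)
  then show "modv q a = modv q b" by (simp add: modv_eq_iff)
qed

lemma card_HL: "card (modv q ` L) = card (modv q ` M)"
proof -
  have "modv q ` L = (\<lambda>c. modv q (comb bs c)) ` M" using L_img by (simp add: image_image)
  moreover have "card ((\<lambda>c. modv q (comb bs c)) ` M) = card (modv q ` M)"
    by (rule card_image_rel) (rule E_key)
  ultimately show ?thesis by simp
qed

abbreviation "H' \<equiv> modv q ` M"

lemma M_iff_H: assumes c: "c \<in> zvec k" shows "c \<in> M \<longleftrightarrow> modv q c \<in> H'"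
proof
  assume "c \<in> M" then show "modv q c \<in> H'" by blast
next
  assume "modv q c \<in> H'"
  then obtain m where m: "m \<in> M" "modv q c = modv q m" by blast
  then have d: "\<forall>i. q dvd (c i - m i)" by (simp add: modv_eq_iff)
  define w where "w = (\<lambda>i. (c i - m i) div q)"
  have cm: "(\<lambda>i. c i - m i) = (\<lambda>i. q * w i)" unfolding w_def using d by (simp add: fun_eq_iff)
  have wz: "w \<in> zvec k" unfolding w_def using c m M_zvec by (auto simp: zvec_def)
  have "comb bs (\<lambda>i. q * w i) = (\<lambda>i. q * comb bs w i)" by (rule comb_smult)
  also have "\<dots> \<in> L" using qTL comb_T by blast
  finally have qwM: "(\<lambda>i. q * w i) \<in> M" unfolding M_def using wz by (simp add: zvec_def)
  have "(\<lambda>i. m i + (\<lambda>i. q * w i) i) \<in> M" using subgrp_add[OF M_subgrp m(1) qwM] .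
  moreover have "(\<lambda>i. m i + (\<lambda>i. q * w i) i) = c" using cm by (simp add: fun_eq_iff) (metis add.commute diff_add_cancel)
  ultimately show "c \<in> M" by simp
qed

definition Rq where "Rq = {(a, b). a \<in> box k q \<and> b \<in> box k q \<and> (\<lambda>i. a i - b i) \<in> M}"

lemma equiv_Rq: "equiv (box k q) Rq"
  unfolding equiv_def refl_on_def sym_def trans_def Rq_def
proof (intro conjI allI impI ballI)
  show "{(a, b). a \<in> box k q \<and> b \<in> box k q \<and> (\<lambda>i. a i - b i) \<in> M} \<subseteq> box k q \<times> box k q" by auto
next
  fix x assume "x \<in> box k q"
  then show "(x, x) \<in> {(a, b). a \<in> box k q \<and> b \<in> box k q \<and> (\<lambda>i. a i - b i) \<in> M}"
    using subgrp_zero[OF M_subgrp] by simp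
next
  fix x y assume "(x, y) \<in> {(a, b). a \<in> box k q \<and> b \<in> box k q \<and> (\<lambda>i. a i - b i) \<in> M}"
  then have xy: "x \<in> box k q" "y \<in> box k q" "(\<lambda>i. x i - y i) \<in> M" by auto
  have "(\<lambda>i. - (\<lambda>i. x i - y i) i) \<in> M" using subgrp_neg[OF M_subgrp xy(3)] .
  then show "(y, x) \<in> {(a, b). a \<in> box k q \<and> b \<in> box k q \<and> (\<lambda>i. a i - b i) \<in> M}" using xy by simp
next
  fix x y z assume "(x, y) \<in> {(a, b). a \<in> box k q \<and> b \<in> box k q \<and> (\<lambda>i. a i - b i) \<in> M}"
    "(y, z) \<in> {(a, b). a \<in> box k q \<and> b \<in> box k q \<and> (\<lambda>i. a i - b i) \<in> M}"
  then have xy: "x \<in> box k q" "z \<in> box k q" "(\<lambda>i. x i - y i) \<in> M" "(\<lambda>i. y i - z i) \<in> M" by auto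
  have "(\<lambda>i. (\<lambda>i. x i - y i) i + (\<lambda>i. y i - z i) i) \<in> M" using subgrp_add[OF M_subgrp xy(3,4)] .
  then show "(x, z) \<in> {(a, b). a \<in> box k q \<and> b \<in> box k q \<and> (\<lambda>i. a i - b i) \<in> M}" using xy by simp
qed

lemma equiv_tor: "equiv T (tor_rel l A S)"
  unfolding equiv_def refl_on_def sym_def trans_def tor_rel_def
proof (intro conjI allI impI ballI)
  show "{(x, y). x \<in> T \<and> y \<in> T \<and> (\<lambda>i. x i - y i) \<in> L} \<subseteq> T \<times> T" by auto
next
  fix x assume "x \<in> T"
  then show "(x, x) \<in> {(x, y). x \<in> T \<and> y \<in> T \<and> (\<lambda>i. x i - y i) \<in> L}"
    using subgrp_zero[OF sL] by simp
next
  fix x y assume "(x, y) \<in> {(x, y). x \<in> T \<and> y \<in> T \<and> (\<lambda>i. x i - y i) \<in> L}"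
  then have xy: "x \<in> T" "y \<in> T" "(\<lambda>i. x i - y i) \<in> L" by auto
  have "(\<lambda>i. - (\<lambda>i. x i - y i) i) \<in> L" using subgrp_neg[OF sL xy(3)] .
  then show "(y, x) \<in> {(x, y). x \<in> T \<and> y \<in> T \<and> (\<lambda>i. x i - y i) \<in> L}" using xy by simp
next
  fix x y z assume "(x, y) \<in> {(x, y). x \<in> T \<and> y \<in> T \<and> (\<lambda>i. x i - y i) \<in> L}"
    "(y, z) \<in> {(x, y). x \<in> T \<and> y \<in> T \<and> (\<lambda>i. x i - y i) \<in> L}"
  then have xy: "x \<in> T" "z \<in> T" "(\<lambda>i. x i - y i) \<in> L" "(\<lambda>i. y i - z i) \<in> L" by auto
  have "(\<lambda>i. (\<lambda>i. x i - y i) i + (\<lambda>i. y i - z i) i) \<in> L" using subgrp_add[OF sL xy(3,4)] .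
  then show "(x, z) \<in> {(x, y). x \<in> T \<and> y \<in> T \<and> (\<lambda>i. x i - y i) \<in> L}" using xy by simp
qed

lemma card_class: assumes a: "a \<in> box k q" shows "card (Rq``{a}) = card H'"
proof -
  let ?f = "\<lambda>b. modv q (\<lambda>i. a i - b i)"
  have cls: "Rq``{a} = {b \<in> box k q. (\<lambda>i. a i - b i) \<in> M}" using a unfolding Rq_def by auto
  have "inj_on ?f (Rq``{a})"
  proof (rule inj_onI)
    fix b b' assume b: "b \<in> Rq``{a}" "b' \<in> Rq``{a}" "?f b = ?f b'"
    then have "\<forall>i. q dvd ((a i - b i) - (a i - b' i))" by (simp add: modv_eq_iff)
    then have "\<forall>i. q dvd (b' i - b i)" by simp
    then have "modv q b' = modv q b" by (simp add: modv_eq_iff)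
    then show "b = b'" using b cls modv_id by (metis (no_types, lifting) mem_Collect_eq)
  qed
  moreover have "?f ` (Rq``{a}) = H'"
  proof
    show "?f ` (Rq``{a}) \<subseteq> H'" using cls by auto
    show "H' \<subseteq> ?f ` (Rq``{a})"
    proof
      fix h assume "h \<in> H'"
      then obtain m where m: "m \<in> M" "h = modv q m" by blast
      define b where "b = modv q (\<lambda>i. a i - m i)"
      have amz: "(\<lambda>i. a i - m i) \<in> zvec k" using a m M_zvec box_zvec zvec_diff by blast
      have bB: "b \<in> box k q" unfolding b_def using modv_box[OF amz qpos] .
      have "modv q (\<lambda>i. a i - b i) = modv q m"
        unfolding b_def modv_def by (simp add: mod_diff_right_eq)
      moreover have abz: "(\<lambda>i. a i - b i) \<in> zvec k" using a bB box_zvec zvec_diff by blast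
      ultimately have "(\<lambda>i. a i - b i) \<in> M" using M_iff_H m by auto
      then have "b \<in> Rq``{a}" using cls bB by simp
      moreover have "h = ?f b" using m \<open>modv q (\<lambda>i. a i - b i) = modv q m\<close> by simp
      ultimately show "h \<in> ?f ` (Rq``{a})" by blast
    qed
  qed
  ultimately show ?thesis by (metis card_image)
qed

lemma m_arith_eq: "m_arith l A S * card H' = nat q ^ k"
proof -
  let ?g = "\<lambda>x. modv q (co x)"
  have "card (T // tor_rel l A S) = card (box k q // Rq)"
  proof (rule card_quotient_map[OF equiv_tor equiv_Rq])
    show "?g ` T = box k q"
    proof
      show "?g ` T \<subseteq> box k q" using co_zvec modv_box qpos by blast
      show "box k q \<subseteq> ?g ` T"
      proof
        fix b assume b: "b \<in> box k q"
        then have bz: "b \<in> zvec k" using box_zvec by blast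
        have "?g (comb bs b) = b" using co_of[OF bz] modv_id[OF b] by simp
        then show "b \<in> ?g ` T" using comb_T by (metis image_eqI)
      qed
    qed
  next
    fix x y assume x: "x \<in> T" and y: "y \<in> T"
    have gz: "?g x \<in> box k q" "?g y \<in> box k q" using co_zvec x y modv_box qpos by blast+
    have "(x, y) \<in> tor_rel l A S \<longleftrightarrow> (\<lambda>i. x i - y i) \<in> L" using x y unfolding tor_rel_def by simp
    also have "\<dots> \<longleftrightarrow> (\<lambda>j. co x j - co y j) \<in> M"
    proof -
      have "comb bs (\<lambda>j. co x j - co y j) = (\<lambda>i. x i - y i)" using co_comb x y by (simp add: comb_diff)
      moreover have "(\<lambda>j. co x j - co y j) \<in> zvec k" using co_zvec x y zvec_diff by blast
      ultimately show ?thesis unfolding M_def by auto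
    qed
    also have "\<dots> \<longleftrightarrow> modv q (\<lambda>j. co x j - co y j) \<in> H'"
      using M_iff_H co_zvec x y zvec_diff by blast
    also have "modv q (\<lambda>j. co x j - co y j) = modv q (\<lambda>i. ?g x i - ?g y i)"
      by (simp add: modv_def mod_diff_eq)
    also have "modv q (\<lambda>i. ?g x i - ?g y i) \<in> H' \<longleftrightarrow> (\<lambda>i. ?g x i - ?g y i) \<in> M"
      using M_iff_H gz box_zvec zvec_diff by blast
    also have "\<dots> \<longleftrightarrow> (?g x, ?g y) \<in> Rq" using gz unfolding Rq_def by simp
    finally show "(x, y) \<in> tor_rel l A S \<longleftrightarrow> (?g x, ?g y) \<in> Rq" .
  qed
  moreover have "card H' * card (box k q // Rq) = card (\<Union>(box k q // Rq))"
  proof (rule card_partition)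
    show "finite (box k q // Rq)" using finite_box[OF qpos] equiv_Rq
      by (simp add: equiv_def refl_on_def finite_quotient)
    show "finite (\<Union>(box k q // Rq))" using finite_box[OF qpos] Union_quotient[OF equiv_Rq] by simp
    show "\<And>c. c \<in> box k q // Rq \<Longrightarrow> card c = card H'" using card_class by (auto elim: quotientE)
    show "\<And>c1 c2. c1 \<in> box k q // Rq \<Longrightarrow> c2 \<in> box k q // Rq \<Longrightarrow> c1 \<noteq> c2 \<Longrightarrow> c1 \<inter> c2 = {}"
      using quotient_disj[OF equiv_Rq] by blast
  qed
  moreover have "\<Union>(box k q // Rq) = box k q" by (rule Union_quotient[OF equiv_Rq])
  ultimately show ?thesis unfolding m_arith_def using card_box[OF qpos] by (simp add: mult.commute)
qed

end



lemma ee_pow_n: "ee q a ^ n = ee q (int n * a)"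
  by (induction n) (auto simp: ee_add distrib_right)

lemma ee_neg: "ee q (- a) * ee q a = 1"
  using ee_add[of q "- a" a] by simp

lemma ee_eq_dvd: assumes "q > 0" "ee q a = ee q b" shows "q dvd (a - b)"
proof -
  have "ee q (a - b) * ee q b = ee q a" using ee_add[of q "a - b" b] by simp
  then have "ee q (a - b) = 1" using assms(2) by simp
  then show ?thesis using ee_1_iff[OF assms(1)] by simp
qed

lemma root_is_ee: assumes "q > 0" "(z::complex) ^ nat q = 1" shows "\<exists>a. 0 \<le> a \<and> a < q \<and> z = ee q a"
proof -
  have "nat q > 0" using assms by simp
  from bij_betw_roots_unity[OF this] have "z \<in> (\<lambda>k. cis (2 * pi * real k / real (nat q))) ` {..<nat q}"
    using assms(2) by (auto simp: bij_betw_def)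
  then obtain m where m: "m < nat q" "z = cis (2 * pi * real m / real (nat q))" by auto
  have "z = ee q (int m)" unfolding ee_def m(2) using assms(1) by simp
  then show ?thesis using m(1) by (intro exI[of _ "int m"]) auto
qed

context latSq
begin

definition Yset where "Yset = {y \<in> box k q. \<forall>c\<in>M. q dvd dotp k c y}"

definition Phi where "Phi = {\<phi> :: (nat \<Rightarrow> int) \<Rightarrow> complex.
      (\<forall>x\<in>T. \<phi> x \<noteq> 0) \<and>
      (\<forall>x\<in>T. \<forall>y\<in>T. \<phi> (\<lambda>i. x i + y i) = \<phi> x * \<phi> y) \<and>
      (\<forall>x\<in>L. \<phi> x = 1) \<and>
      (\<forall>x. x \<notin> T \<longrightarrow> \<phi> x = 1)}"

lemma m_Cstar_Phi: "m_Cstar l A S = card Phi" unfolding m_Cstar_def Phi_def by simp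

definition Psi where "Psi y = (\<lambda>x. if x \<in> T then ee q (dotp k (co x) y) else 1)"

lemma co_add: assumes "x \<in> T" "y \<in> T" shows "co (\<lambda>i. x i + y i) = (\<lambda>j. co x j + co y j)"
proof -
  have "comb bs (\<lambda>j. co x j + co y j) = (\<lambda>i. x i + y i)" using co_comb assms by (simp add: comb_add)
  moreover have "(\<lambda>j. co x j + co y j) \<in> zvec k" using co_zvec assms by (auto simp: zvec_def)
  ultimately show ?thesis using co_of by metis
qed

definition dlt :: "nat \<Rightarrow> nat \<Rightarrow> int" where "dlt j = (\<lambda>i. if i = j then 1 else 0)"

lemma comb_dlt: "j < k \<Longrightarrow> comb bs (dlt j) = bs ! j"
  unfolding comb_def dlt_def by (simp add: if_distrib[of "\<lambda>t. t * _"] sum.delta cong: if_cong)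

lemma co_bs: "j < k \<Longrightarrow> co (bs ! j) = dlt j"
  using co_of[of "dlt j"] comb_dlt[of j] by (simp add: dlt_def zvec_def)

lemma bs_T: "j < k \<Longrightarrow> bs ! j \<in> T" using bsT by auto

lemma dotp_dlt: "j < k \<Longrightarrow> dotp k (dlt j) y = y j"
  unfolding dotp_def dlt_def by (simp add: if_distrib[of "\<lambda>t. t * _"] sum.delta cong: if_cong)

lemma Psi_in: assumes y: "y \<in> Yset" shows "Psi y \<in> Phi"
  unfolding Phi_def
proof (intro CollectI conjI ballI allI impI)
  fix x assume "x \<in> T" then show "Psi y x \<noteq> 0" unfolding Psi_def by simp
next
  fix x x' assume x: "x \<in> T" and x': "x' \<in> T"
  have "(\<lambda>i. x i + x' i) \<in> T" using subgrp_add[OF sT x x'] .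
  then show "Psi y (\<lambda>i. x i + x' i) = Psi y x * Psi y x'"
    unfolding Psi_def using x x' by (simp add: co_add dotp_add1 ee_add)
next
  fix x assume x: "x \<in> L"
  then have xT: "x \<in> T" using LT by blast
  then have "co x \<in> M" using co_zvec co_comb x unfolding M_def by auto
  then have "q dvd dotp k (co x) y" using y unfolding Yset_def by blast
  then show "Psi y x = 1" unfolding Psi_def using xT ee_1_iff[OF qpos] by simp
next
  fix x assume "x \<notin> T" then show "Psi y x = 1" unfolding Psi_def by simp
qed

lemma Psi_inj: "inj_on Psi Yset"
proof (rule inj_onI)
  fix y y' assume y: "y \<in> Yset" and y': "y' \<in> Yset" and e: "Psi y = Psi y'"
  have "q dvd (y j - y' j)" for j
  proof (cases "j < k")
    case True
    have "Psi y (bs ! j) = Psi y' (bs ! j)" using e by simp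
    then have "ee q (y j) = ee q (y' j)" unfolding Psi_def using bs_T[OF True] co_bs[OF True] dotp_dlt[OF True] by simp
    then show ?thesis using ee_eq_dvd[OF qpos] by blast
  next
    case False
    then show ?thesis using y y' unfolding Yset_def box_def by auto
  qed
  then have "modv q y = modv q y'" by (simp add: modv_eq_iff)
  then show "y = y'" using modv_id y y' unfolding Yset_def by (metis (no_types, lifting) mem_Collect_eq)
qed

context
  fixes \<phi> assumes phi: "\<phi> \<in> Phi"
begin

lemma phi_mult: "x \<in> T \<Longrightarrow> y \<in> T \<Longrightarrow> \<phi> (\<lambda>i. x i + y i) = \<phi> x * \<phi> y"
  using phi unfolding Phi_def by blast
lemma phi_nz: "x \<in> T \<Longrightarrow> \<phi> x \<noteq> 0" using phi unfolding Phi_def by blast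
lemma phi_L: "x \<in> L \<Longrightarrow> \<phi> x = 1" using phi unfolding Phi_def by blast
lemma phi_out: "x \<notin> T \<Longrightarrow> \<phi> x = 1" using phi unfolding Phi_def by blast

lemma phi0: "\<phi> (\<lambda>i. 0) = 1"
proof -
  have z: "(\<lambda>i. 0) \<in> T" using subgrp_zero[OF sT] .
  have "\<phi> (\<lambda>i. 0) = \<phi> (\<lambda>i. 0) * \<phi> (\<lambda>i. 0)" using phi_mult[OF z z] by simp
  then show ?thesis using phi_nz[OF z] by simp
qed

lemma phi_pow: assumes t: "t \<in> T" shows "\<phi> (\<lambda>i. int n * t i) = \<phi> t ^ n"
proof (induction n)
  case 0 then show ?case using phi0 by simp
next
  case (Suc n)
  have nt: "(\<lambda>i. int n * t i) \<in> T" using subgrp_smult[OF sT t] .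
  have "\<phi> (\<lambda>i. int (Suc n) * t i) = \<phi> (\<lambda>i. (\<lambda>i. int n * t i) i + t i)" by (simp add: distrib_right add.commute)
  also have "\<dots> = \<phi> t ^ n * \<phi> t" using phi_mult[OF nt t] Suc by simp
  finally show ?case by simp
qed

lemma phi_smult: assumes t: "t \<in> T" "\<phi> t = ee q a" shows "\<phi> (\<lambda>i. c * t i) = ee q (c * a)"
proof (cases "c \<ge> 0")
  case True
  then show ?thesis using phi_pow[OF t(1), of "nat c"] t(2) ee_pow_n by simp
next
  case False
  define n where "n = nat (- c)"
  have c: "c = - int n" using False unfolding n_def by simp
  have nt: "(\<lambda>i. int n * t i) \<in> T" using subgrp_smult[OF sT t(1)] .
  have nnt: "(\<lambda>i. - (int n * t i)) \<in> T" using subgrp_neg[OF sT nt] by simp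
  have pn: "\<phi> (\<lambda>i. int n * t i) = ee q (int n * a)" using phi_pow[OF t(1), of n] t(2) ee_pow_n by simp
  have "\<phi> (\<lambda>i. - (int n * t i)) * \<phi> (\<lambda>i. int n * t i) = 1"
    using phi_mult[OF nnt nt] phi0 by simp
  then have "\<phi> (\<lambda>i. - (int n * t i)) * ee q (int n * a) = ee q (- (int n * a)) * ee q (int n * a)"
    using pn ee_neg by simp
  then have "\<phi> (\<lambda>i. - (int n * t i)) = ee q (- (int n * a))" by simp
  then show ?thesis unfolding c by simp
qed

lemma phi_sum: assumes "finite J" "\<And>j. j \<in> J \<Longrightarrow> t j \<in> T \<and> \<phi> (t j) = ee q (a j)"
  shows "\<phi> (\<lambda>i. \<Sum>j\<in>J. c j * t j i) = ee q (\<Sum>j\<in>J. c j * a j)"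
  using assms
proof (induction J rule: finite_induct)
  case empty then show ?case using phi0 by simp
next
  case (insert j J)
  have tj: "t j \<in> T" "\<phi> (t j) = ee q (a j)" using insert.prems by auto
  have ctj: "(\<lambda>i. c j * t j i) \<in> T" using subgrp_smult[OF sT tj(1)] .
  have rest: "(\<lambda>i. \<Sum>j\<in>J. c j * t j i) \<in> T"
    by (rule subgrp_sum[OF sT insert.hyps(1)]) (use insert.prems subgrp_smult[OF sT] in auto)
  have "\<phi> (\<lambda>i. \<Sum>j\<in>insert j J. c j * t j i) = \<phi> (\<lambda>i. (\<lambda>i. c j * t j i) i + (\<lambda>i. \<Sum>j\<in>J. c j * t j i) i)"
    using insert.hyps by simp
  also have "\<dots> = \<phi> (\<lambda>i. c j * t j i) * \<phi> (\<lambda>i. \<Sum>j\<in>J. c j * t j i)" by (rule phi_mult[OF ctj rest])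
  also have "\<dots> = ee q (c j * a j) * ee q (\<Sum>j\<in>J. c j * a j)"
    using phi_smult[OF tj] insert.IH insert.prems by simp
  also have "\<dots> = ee q (\<Sum>j\<in>insert j J. c j * a j)" using insert.hyps by (simp add: ee_add)
  finally show ?case .
qed

lemma phi_root: assumes t: "t \<in> T" shows "\<exists>a. 0 \<le> a \<and> a < q \<and> \<phi> t = ee q a"
proof -
  have "(\<lambda>i. int (nat q) * t i) \<in> L" using qTL[OF t] qpos by simp
  then have "\<phi> t ^ nat q = 1" using phi_pow[OF t, of "nat q"] phi_L by simp
  then show ?thesis using root_is_ee[OF qpos] by blast
qed

definition yphi where "yphi = (\<lambda>j. if j < k then (SOME a. 0 \<le> a \<and> a < q \<and> \<phi> (bs ! j) = ee q a) else 0)"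

lemma yphi_prop: "j < k \<Longrightarrow> 0 \<le> yphi j \<and> yphi j < q \<and> \<phi> (bs ! j) = ee q (yphi j)"
  unfolding yphi_def using someI_ex[OF phi_root[OF bs_T]] by simp

lemma phi_eq: "\<phi> = Psi yphi"
proof
  fix x show "\<phi> x = Psi yphi x"
  proof (cases "x \<in> T")
    case False then show ?thesis using phi_out unfolding Psi_def by simp
  next
    case True
    have "x = (\<lambda>i. \<Sum>j\<in>{..<k}. co x j * (bs ! j) i)" using co_comb[OF True] unfolding comb_def by simp
    then have "\<phi> x = ee q (\<Sum>j\<in>{..<k}. co x j * yphi j)"
      using phi_sum[of "{..<k}" "\<lambda>j. bs ! j" yphi "co x"] bs_T yphi_prop by simp
    then show ?thesis unfolding Psi_def dotp_def using True by simp
  qed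
qed

lemma yphi_Y: "yphi \<in> Yset"
  unfolding Yset_def
proof (intro CollectI conjI ballI)
  show "yphi \<in> box k q" unfolding box_def using yphi_prop by (auto simp: yphi_def)
next
  fix c assume c: "c \<in> M"
  then have cL: "comb bs c \<in> L" "c \<in> zvec k" unfolding M_def by auto
  then have "comb bs c \<in> T" using LT by blast
  then have "Psi yphi (comb bs c) = ee q (dotp k c yphi)" unfolding Psi_def using co_of[OF cL(2)] by simp
  moreover have "Psi yphi (comb bs c) = 1" using phi_L[OF cL(1)] phi_eq by simp
  ultimately show "q dvd dotp k c yphi" using ee_1_iff[OF qpos] by simp
qed

end

lemma Psi_bij: "bij_betw Psi Yset Phi"
  unfolding bij_betw_def
proof
  show "inj_on Psi Yset" by (rule Psi_inj)
  show "Psi ` Yset = Phi"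
  proof
    show "Psi ` Yset \<subseteq> Phi" using Psi_in by blast
    show "Phi \<subseteq> Psi ` Yset"
    proof
      fix \<phi> assume p: "\<phi> \<in> Phi"
      show "\<phi> \<in> Psi ` Yset" using phi_eq[OF p] yphi_Y[OF p] by (metis image_eqI)
    qed
  qed
qed

lemma Cstar_eq_arith: "m_Cstar l A S = m_arith l A S"
proof -
  have "m_Cstar l A S = card Yset" using m_Cstar_Phi bij_betw_same_card[OF Psi_bij] by simp
  moreover have "card Yset * card H' = nat q ^ k" unfolding Yset_def
    using duality[OF qpos M_subgrp M_zvec] .
  moreover have "m_arith l A S * card H' = nat q ^ k" by (rule m_arith_eq)
  moreover have "card H' > 0"
  proof -
    have "H' \<subseteq> box k q" using M_zvec modv_box qpos by blast
    then have "finite H'" using finite_box[OF qpos] finite_subset by blast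
    moreover have "H' \<noteq> {}" using subgrp_zero[OF M_subgrp] by blast
    ultimately show ?thesis by (simp add: card_gt_0_iff)
  qed
  ultimately show ?thesis by (metis mult_right_cancel neq0_conv)
qed

lemma count_eq: assumes kl: "k \<le> l"
  shows "card {x \<in> box l q. \<forall>v\<in>L. q dvd dotp l v x} = nat q ^ (l - k) * m_arith l A S"
proof -
  have LZ: "L \<subseteq> zvec l" by (rule lattice_zvec[OF hA hS])
  have d: "card {x \<in> box l q. \<forall>v\<in>L. q dvd dotp l v x} * card H' = nat q ^ l"
    using duality[OF qpos sL LZ] card_HL by simp
  have "nat q ^ l = nat q ^ (l - k) * nat q ^ k" using kl by (simp add: power_add[symmetric])
  also have "\<dots> = nat q ^ (l - k) * m_arith l A S * card H'" using m_arith_eq by simp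
  finally have e: "card {x \<in> box l q. \<forall>v\<in>L. q dvd dotp l v x} * card H' = nat q ^ (l - k) * m_arith l A S * card H'"
    using d by simp
  have "card H' > 0"
  proof -
    have "H' \<subseteq> box k q" using M_zvec modv_box qpos by blast
    then have "finite H'" using finite_box[OF qpos] finite_subset by blast
    moreover have "H' \<noteq> {}" using subgrp_zero[OF M_subgrp] by blast
    ultimately show ?thesis by (simp add: card_gt_0_iff)
  qed
  then show ?thesis using e by simp
qed

end



definition dl :: "nat \<Rightarrow> nat \<Rightarrow> int" where "dl j = (\<lambda>i. if i = j then 1 else 0)"

context latS
begin

lemma comb_dl: "j < k \<Longrightarrow> comb bs (dl j) = bs ! j"
  unfolding comb_def dl_def by (simp add: if_distrib[of "\<lambda>t. t * _"] sum.delta cong: if_cong)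

lemma comb_sum_co:
  assumes "finite V" "V \<subseteq> T"
  shows "comb bs (\<lambda>t. \<Sum>v\<in>V. d v * co v t) = (\<lambda>i. \<Sum>v\<in>V. d v * v i)"
proof
  fix i
  have "comb bs (\<lambda>t. \<Sum>v\<in>V. d v * co v t) i = (\<Sum>j<k. (\<Sum>v\<in>V. d v * co v j) * (bs ! j) i)"
    unfolding comb_def by simp
  also have "\<dots> = (\<Sum>j<k. \<Sum>v\<in>V. d v * (co v j * (bs ! j) i))"
    by (simp add: sum_distrib_right mult.assoc)
  also have "\<dots> = (\<Sum>v\<in>V. \<Sum>j<k. d v * (co v j * (bs ! j) i))" by (rule sum.swap)
  also have "\<dots> = (\<Sum>v\<in>V. d v * comb bs (co v) i)"
    unfolding comb_def by (simp add: sum_distrib_left)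
  also have "\<dots> = (\<Sum>v\<in>V. d v * v i)" using assms co_comb by (intro sum.cong) auto
  finally show "comb bs (\<lambda>t. \<Sum>v\<in>V. d v * co v t) i = (\<Sum>v\<in>V. d v * v i)" .
qed

lemma indep_card_le: assumes V: "finite V" "V \<subseteq> L" "zlin_indep V" shows "card V \<le> k"
proof (rule ccontr)
  assume "\<not> card V \<le> k"
  then have cV: "card V > k" by simp
  have VT: "V \<subseteq> T" using V LT by blast
  have "co ` V \<subseteq> zvec k" using co_zvec VT by blast
  then obtain d where d: "\<exists>v\<in>V. d v \<noteq> 0" "(\<lambda>t. \<Sum>v\<in>V. d v * co v t) = (\<lambda>t. 0)"
    using dep_exists[OF V(1) _ cV, of co] by blast
  have "(\<lambda>i. \<Sum>v\<in>V. d v * v i) = comb bs (\<lambda>t. 0)" using comb_sum_co[OF V(1) VT, of d] d(2) by simp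
  also have "\<dots> = (\<lambda>i. 0)" by (simp add: comb_def)
  finally have "\<forall>v\<in>V. d v = 0" using V(3) unfolding zlin_indep_def by blast
  then show False using d(1) by blast
qed

lemma rank_eq: "rankS A S = k"
proof -
  define e where "e = max_div l A S"
  have epos: "e > 0" and eL: "\<And>x. x \<in> T \<Longrightarrow> (\<lambda>i. int e * x i) \<in> L"
    using max_div_prop unfolding e_def by auto
  define g where "g = (\<lambda>j. (\<lambda>i. int e * (bs ! j) i))"
  define V0 where "V0 = g ` {..<k}"
  have bT: "j < k \<Longrightarrow> bs ! j \<in> T" for j using bsT by auto
  have injg: "inj_on g {..<k}"
  proof (rule inj_onI)
    fix a b assume ab: "a \<in> {..<k}" "b \<in> {..<k}" "g a = g b"
    then have "bs ! a = bs ! b" using epos unfolding g_def by (auto simp: fun_eq_iff)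
    then have "comb bs (dl a) = comb bs (dl b)" using ab comb_dl by simp
    moreover have "dl a \<in> zvec k" "dl b \<in> zvec k" using ab by (auto simp: dl_def zvec_def)
    ultimately have "dl a = dl b" using comb_inj by blast
    then have "dl a a = dl b a" by simp
    then show "a = b" by (simp add: dl_def split: if_splits)
  qed
  have cardV0: "card V0 = k" unfolding V0_def using card_image[OF injg] by simp
  have V0L: "V0 \<subseteq> L" unfolding V0_def g_def using eL bT by auto
  have indV0: "zlin_indep V0" unfolding zlin_indep_def
  proof (intro allI impI ballI)
    fix c v assume c: "(\<lambda>i. \<Sum>v\<in>V0. c v * v i) = (\<lambda>i. 0)" and v: "v \<in> V0"
    have "(\<lambda>i. \<Sum>v\<in>V0. c v * v i) = (\<lambda>i. \<Sum>j<k. c (g j) * g j i)"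
      unfolding V0_def
    proof
      fix i show "(\<Sum>v\<in>g ` {..<k}. c v * v i) = (\<Sum>j<k. c (g j) * g j i)"
        using sum.reindex[OF injg, of "\<lambda>v. c v * v i"] by (simp add: comp_def)
    qed
    also have "\<dots> = comb bs (\<lambda>j. c (g j) * int e)" unfolding comb_def g_def by (simp add: mult.assoc)
    finally have "comb bs (\<lambda>j. c (g j) * int e) = (\<lambda>i. 0)" using c by simp
    then have "\<forall>j<k. c (g j) * int e = 0" using bsi unfolding indep_def by blast
    then have "\<forall>j<k. c (g j) = 0" using epos by simp
    then show "c v = 0" using v unfolding V0_def by auto
  qed
  define C where "C = {card V | V. finite V \<and> V \<subseteq> L \<and> zlin_indep V}"
  have Cle: "\<forall>y\<in>C. y \<le> k"
  proof
    fix y assume "y \<in> C"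
    then obtain V where "y = card V" "finite V" "V \<subseteq> L" "zlin_indep V" unfolding C_def by blast
    then show "y \<le> k" using indep_card_le by simp
  qed
  have finV0: "finite V0" unfolding V0_def by simp
  have kC: "k \<in> C" unfolding C_def
    by (rule CollectI, rule exI[of _ V0]) (use cardV0 V0L indV0 finV0 in simp)
  have finC: "finite C" using Cle finite_subset[of C "{..k}"] by auto
  have "Max C = k" by (rule Max_eqI[OF finC]) (use Cle kC in auto)
  then show ?thesis unfolding rankS_def C_def by simp
qed

end

lemma per_S:
  assumes hA: "\<forall>\<alpha>\<in>set A. \<alpha> \<in> zvec l" and hS: "S \<subseteq> {..<length A}"
    and q: "(q::nat) > 0" "max_div l A S dvd q"
  shows "card {x \<in> box l (int q). \<forall>v\<in>lattice A S. int q dvd dotp l v x} = q ^ (l - rankS A S) * m_arith l A S"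
    and "m_Cstar l A S = m_arith l A S"
proof -
  obtain bs where bs: "length bs \<le> l" "set bs \<subseteq> torsion l A S" "indep bs" "torsion l A S = range (comb bs)"
    using basis_exists[OF torsion_subgrp[OF hA hS] torsion_zvec] by blast
  interpret latSq l A S bs "int q"
    by unfold_locales (use hA hS bs q in auto)
  show "card {x \<in> box l (int q). \<forall>v\<in>lattice A S. int q dvd dotp l v x} = q ^ (l - rankS A S) * m_arith l A S"
    using count_eq[OF bs(1)] rank_eq by simp
  show "m_Cstar l A S = m_arith l A S" by (rule Cstar_eq_arith)
qed



lemma alt_sum_pow: assumes "finite J"
  shows "(\<Sum>S\<in>Pow J. (-1::int) ^ card S) = (if J = {} then 1 else 0)"
proof (cases "J = {}")
  case True then show ?thesis by simp
next
  case False
  then have "{} \<subset> J" by auto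
  from card_subsupersets_even_odd[OF assms this]
  have "card {S \<in> Pow J. even (card S)} = card {S \<in> Pow J. odd (card S)}"
    by (simp add: Pow_def conj_commute)
  then have "(\<Sum>S\<in>Pow J. (-1::int) ^ card S) = 0"
    using assms by (intro sum_alternating_cancels) auto
  then show ?thesis using False by simp
qed

lemma incl_excl:
  assumes "finite X" "finite I"
  shows "int (card {x \<in> X. \<forall>j\<in>I. \<not> P j x}) = (\<Sum>S\<in>Pow I. (-1) ^ card S * int (card {x \<in> X. \<forall>j\<in>S. P j x}))"
proof -
  have "(\<Sum>S\<in>Pow I. (-1) ^ card S * int (card {x \<in> X. \<forall>j\<in>S. P j x}))
      = (\<Sum>S\<in>Pow I. \<Sum>x\<in>X. if \<forall>j\<in>S. P j x then (-1) ^ card S else 0)"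
  proof (rule sum.cong[OF refl])
    fix S
    have "int (card {x \<in> X. \<forall>j\<in>S. P j x}) = (\<Sum>x\<in>{x \<in> X. \<forall>j\<in>S. P j x}. 1)" by simp
    also have "\<dots> = (\<Sum>x\<in>X. if \<forall>j\<in>S. P j x then 1 else 0)" by (rule sum.inter_filter[OF assms(1)])
    finally show "(-1) ^ card S * int (card {x \<in> X. \<forall>j\<in>S. P j x}) = (\<Sum>x\<in>X. if \<forall>j\<in>S. P j x then (-1) ^ card S else 0)"
      by (simp add: sum_distrib_left if_distrib cong: if_cong)
  qed
  also have "\<dots> = (\<Sum>x\<in>X. \<Sum>S\<in>Pow I. if \<forall>j\<in>S. P j x then (-1) ^ card S else 0)" by (rule sum.swap)
  also have "\<dots> = (\<Sum>x\<in>X. if \<forall>j\<in>I. \<not> P j x then 1 else 0)"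
  proof (rule sum.cong[OF refl])
    fix x
    have fI: "finite (Pow I)" using assms(2) by simp
    have "(\<Sum>S\<in>Pow I. if \<forall>j\<in>S. P j x then (-1::int) ^ card S else 0) = (\<Sum>S\<in>{S \<in> Pow I. \<forall>j\<in>S. P j x}. (-1) ^ card S)"
      by (rule sum.inter_filter[OF fI, symmetric])
    also have "{S \<in> Pow I. \<forall>j\<in>S. P j x} = Pow {j \<in> I. P j x}" by auto
    also have "(\<Sum>S\<in>Pow {j \<in> I. P j x}. (-1::int) ^ card S) = (if {j \<in> I. P j x} = {} then 1 else 0)"
      by (rule alt_sum_pow) (use assms(2) in auto)
    also have "({j \<in> I. P j x} = {}) = (\<forall>j\<in>I. \<not> P j x)" by auto
    finally show "(\<Sum>S\<in>Pow I. if \<forall>j\<in>S. P j x then (-1::int) ^ card S else 0) = (if \<forall>j\<in>I. \<not> P j x then 1 else 0)" .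
  qed
  also have "\<dots> = int (card {x \<in> X. \<forall>j\<in>I. \<not> P j x})"
    using sum.inter_filter[OF assms(1), of "\<lambda>_. (1::int)" "\<lambda>x. \<forall>j\<in>I. \<not> P j x"] by simp
  finally show ?thesis by simp
qed

lemma card_filter_bij:
  assumes "bij_betw g X Y"
  shows "card {x \<in> X. P (g x)} = card {y \<in> Y. P y}"
proof -
  have "inj_on g {x \<in> X. P (g x)}" using assms unfolding bij_betw_def by (auto intro: inj_on_subset)
  moreover have "g ` {x \<in> X. P (g x)} = {y \<in> Y. P y}" using assms unfolding bij_betw_def by auto
  ultimately show ?thesis by (metis card_image)
qed

lemma dotp_lattice:
  assumes "finite S" "v \<in> lattice A S" "\<forall>j\<in>S. q dvd dotp l (A ! j) y"
  shows "q dvd dotp l v y"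
proof -
  obtain c where c: "v = (\<lambda>i. \<Sum>j\<in>S. c j * (A ! j) i)" using assms(2) unfolding lattice_def by blast
  have "dotp l v y = (\<Sum>i<l. \<Sum>j\<in>S. c j * (A ! j) i * y i)" unfolding c dotp_def by (simp add: sum_distrib_right)
  also have "\<dots> = (\<Sum>j\<in>S. \<Sum>i<l. c j * (A ! j) i * y i)" by (rule sum.swap)
  also have "\<dots> = (\<Sum>j\<in>S. c j * dotp l (A ! j) y)" unfolding dotp_def by (simp add: sum_distrib_left mult.assoc)
  finally show ?thesis using assms(3) by (simp add: dvd_sum)
qed

lemma NS_eq:
  assumes hA: "\<forall>\<alpha>\<in>set A. \<alpha> \<in> zvec l" and hS: "S \<subseteq> {..<length A}"
    and q: "(q::nat) > 0" "max_div l A S dvd q"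
  shows "card {x \<in> {..<l} \<rightarrow>\<^sub>E {..<q}. \<forall>j\<in>S. (\<Sum>i<l. (A ! j) i * int (x i)) mod int q = 0}
       = q ^ (l - rankS A S) * m_arith l A S"
proof -
  let ?g = "\<lambda>x i. if i < l then int (x i) else 0"
  have finS: "finite S" using hS finite_subset by blast
  have dg: "(\<Sum>i<l. (A ! j) i * int (x i)) = dotp l (A ! j) (?g x)" for j x unfolding dotp_def by simp
  have eqv: "(\<forall>j\<in>S. int q dvd dotp l (A ! j) y) \<longleftrightarrow> (\<forall>v\<in>lattice A S. int q dvd dotp l v y)" for y
    using lattice_gen[OF finS] dotp_lattice[OF finS] by blast
  have "card {x \<in> {..<l} \<rightarrow>\<^sub>E {..<q}. \<forall>j\<in>S. (\<Sum>i<l. (A ! j) i * int (x i)) mod int q = 0}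
      = card {x \<in> {..<l} \<rightarrow>\<^sub>E {..<q}. (\<lambda>y. \<forall>v\<in>lattice A S. int q dvd dotp l v y) (?g x)}"
    using eqv by (simp add: dg dvd_eq_mod_eq_0)
  also have "\<dots> = card {y \<in> box l (int q). \<forall>v\<in>lattice A S. int q dvd dotp l v y}"
    by (rule card_filter_bij[OF box_bij])
  also have "\<dots> = q ^ (l - rankS A S) * m_arith l A S" by (rule per_S(1)[OF hA hS q])
  finally show ?thesis .
qed

theorem mainTheorem12:
  fixes l :: nat and A :: "(nat \<Rightarrow> int) list"
  assumes "\<forall>\<alpha>\<in>set A. \<alpha> \<in> zvec l"
  shows "(\<forall>q::nat. q > 0 \<and> rho l A dvd q \<longrightarrow>
            int (char_qp l A q) = poly (chi_Cstar l A) (int q))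
       \<and> (\<forall>q::nat. q > 0 \<and> rho l A dvd q \<longrightarrow>
            int (char_qp l A q) = poly (chi_arith l A) (int q))
       \<and> chi_Cstar l A = chi_arith l A"
proof -
  have hS: "S \<in> Pow {..<length A} \<Longrightarrow> S \<subseteq> {..<length A}" for S by simp
  have mdpos: "max_div l A S > 0" if hS': "S \<subseteq> {..<length A}" for S
  proof -
    obtain bs where bs: "length bs \<le> l" "set bs \<subseteq> torsion l A S" "indep bs" "torsion l A S = range (comb bs)"
      using basis_exists[OF torsion_subgrp[OF assms hS'] torsion_zvec] by blast
    interpret latS l A S bs by unfold_locales (use assms hS' bs in auto)
    show ?thesis using max_div_prop by blast
  qed
  have CA: "m_Cstar l A S = m_arith l A S" if "S \<subseteq> {..<length A}" for S
    using per_S(2)[OF assms that mdpos[OF that] dvd_refl] .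
  have eq3: "chi_Cstar l A = chi_arith l A"
    unfolding chi_Cstar_def chi_arith_def using CA by (intro sum.cong) auto
  have part2: "int (char_qp l A q) = poly (chi_arith l A) (int q)" if q: "q > 0" "rho l A dvd q" for q
  proof -
    have md: "max_div l A S dvd q" if "S \<subseteq> {..<length A}" for S
    proof -
      have "max_div l A S dvd rho l A" unfolding rho_def using that by (intro dvd_Lcm) auto
      then show ?thesis using q(2) by (rule dvd_trans)
    qed
    let ?X = "{..<l} \<rightarrow>\<^sub>E {..<q}"
    let ?P = "\<lambda>j x. (\<Sum>i<l. (A ! j) i * int (x i)) mod int q = 0"
    have finX: "finite ?X" by (simp add: finite_PiE)
    have ae: "(\<forall>\<alpha>\<in>set A. (\<Sum>i<l. \<alpha> i * int (x i)) mod int q \<noteq> 0) \<longleftrightarrow> (\<forall>j\<in>{..<length A}. \<not> ?P j x)" for x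
      unfolding all_set_conv_all_nth by (auto simp: dvd_eq_mod_eq_0)
    have "char_qp l A q = card {x \<in> ?X. \<forall>j\<in>{..<length A}. \<not> ?P j x}"
      unfolding char_qp_def using ae by simp
    then have "int (char_qp l A q) = (\<Sum>S\<in>Pow {..<length A}. (-1) ^ card S * int (card {x \<in> ?X. \<forall>j\<in>S. ?P j x}))"
      using incl_excl[OF finX, of "{..<length A}" ?P] by simp
    also have "\<dots> = (\<Sum>S\<in>Pow {..<length A}. (-1) ^ card S * int (m_arith l A S) * int q ^ (l - rankS A S))"
      using NS_eq[OF assms _ q(1) md] by (intro sum.cong) (auto simp: mult.commute mult.left_commute)
    also have "\<dots> = poly (chi_arith l A) (int q)"
      unfolding chi_arith_def by (simp add: poly_sum poly_monom)
    finally show ?thesis .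
  qed
  show ?thesis using part2 eq3 by simp
qed


end
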